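(* Let $T$ be a non-trivial tree. Then $\dim_{1,f}(T)=\dim_f(T)$ if and only if either $T\in\{P_2, P_3\}$, or $ex(T)\ge 1$ and $V(T)=M_2(T) \cup L(T)$.
   Context: $P_n$ is the path on $n$ vertices; $d(x,y)$ is the distance in the tree. For a function $g$ on $V(T)$ and $U\subseteq V(T)$, $g(U)=\sum_{s\in U}g(s)$. $R\{x,y\}=\{z: d(x,z)\ne d(y,z)\}$; $g:V(T)\to[0,1]$ is a resolving function if $g(R\{x,y\})\ge1$ for all distinct $x,y$; $\dim_f(T)$ is the minimum of $g(V(T))$ over resolving functions. $d_1(x,y)=\min\{d(x,y),2\}$, $R_1\{x,y\}=\{z: d_1(x,z)\neq d_1(y,z)\}$; $h:V(T)\to[0,1]$ is a $1$-truncated resolving function if $h(R_1\{x,y\})\ge 1$ for all distinct $x,y$, and $\dim_{1,f}(T)$ is the minimum of $h(V(T))$ over such $h$. $L(T)$ is the set of leaves (degree-one vertices); a major vertex has degree at least three. A leaf $\ell$ is a terminal vertex of a major vertex $v$ if $d(\ell,v)<d(\ell,w)$ for every other major vertex $w$; $ter(v)$ is the number of terminal vertices of $v$; an exterior major vertex is a major vertex with $ter(v)>0$. $M(T)$ is the set of exterior major vertices, $ex(T)=|M(T)|$, $M_2(T)=\{w\in M(T): ter(w)\ge2\}$. *)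

theory Defs
  imports Complex_Main
begin

definition walk :: "('a \<Rightarrow> 'a \<Rightarrow> bool) \<Rightarrow> 'a list \<Rightarrow> bool" where
  "walk E xs \<longleftrightarrow> (\<forall>i. Suc i < length xs \<longrightarrow> E (xs ! i) (xs ! Suc i))"

definition connected_graph :: "'a set \<Rightarrow> ('a \<Rightarrow> 'a \<Rightarrow> bool) \<Rightarrow> bool" where
  "connected_graph V E \<longleftrightarrow> (\<forall>x\<in>V. \<forall>y\<in>V. \<exists>xs. xs \<noteq> [] \<and> hd xs = x \<and> last xs = y
      \<and> set xs \<subseteq> V \<and> walk E xs)"

definition acyclic_graph :: "'a set \<Rightarrow> ('a \<Rightarrow> 'a \<Rightarrow> bool) \<Rightarrow> bool" where
  "acyclic_graph V E \<longleftrightarrow> \<not> (\<exists>xs. length xs \<ge> 3 \<and> distinct xs \<and> set xs \<subseteq> V \<and> walk E xs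
      \<and> E (last xs) (hd xs))"

definition is_tree :: "'a set \<Rightarrow> ('a \<Rightarrow> 'a \<Rightarrow> bool) \<Rightarrow> bool" where
  "is_tree V E \<longleftrightarrow> finite V \<and> V \<noteq> {} \<and> (\<forall>x y. E x y \<longrightarrow> x \<in> V \<and> y \<in> V)
     \<and> (\<forall>x y. E x y \<longrightarrow> E y x) \<and> (\<forall>x. \<not> E x x)
     \<and> connected_graph V E \<and> acyclic_graph V E"

definition gdist :: "'a set \<Rightarrow> ('a \<Rightarrow> 'a \<Rightarrow> bool) \<Rightarrow> 'a \<Rightarrow> 'a \<Rightarrow> nat" where
  "gdist V E x y = (LEAST n. \<exists>xs. xs \<noteq> [] \<and> hd xs = x \<and> last xs = y \<and> set xs \<subseteq> V
      \<and> walk E xs \<and> length xs = Suc n)"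

definition gdist1 :: "'a set \<Rightarrow> ('a \<Rightarrow> 'a \<Rightarrow> bool) \<Rightarrow> 'a \<Rightarrow> 'a \<Rightarrow> nat" where
  "gdist1 V E x y = min (gdist V E x y) 2"

definition resolving_set :: "'a set \<Rightarrow> ('a \<Rightarrow> 'a \<Rightarrow> bool) \<Rightarrow> 'a \<Rightarrow> 'a \<Rightarrow> 'a set" where
  "resolving_set V E x y = {z \<in> V. gdist V E x z \<noteq> gdist V E y z}"

definition resolving_set1 :: "'a set \<Rightarrow> ('a \<Rightarrow> 'a \<Rightarrow> bool) \<Rightarrow> 'a \<Rightarrow> 'a \<Rightarrow> 'a set" where
  "resolving_set1 V E x y = {z \<in> V. gdist1 V E x z \<noteq> gdist1 V E y z}"

definition resolving_function :: "'a set \<Rightarrow> ('a \<Rightarrow> 'a \<Rightarrow> bool) \<Rightarrow> ('a \<Rightarrow> real) \<Rightarrow> bool" where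
  "resolving_function V E g \<longleftrightarrow> (\<forall>v\<in>V. 0 \<le> g v \<and> g v \<le> 1)
     \<and> (\<forall>x\<in>V. \<forall>y\<in>V. x \<noteq> y \<longrightarrow> sum g (resolving_set V E x y) \<ge> 1)"

definition trunc_resolving_function :: "'a set \<Rightarrow> ('a \<Rightarrow> 'a \<Rightarrow> bool) \<Rightarrow> ('a \<Rightarrow> real) \<Rightarrow> bool" where
  "trunc_resolving_function V E h \<longleftrightarrow> (\<forall>v\<in>V. 0 \<le> h v \<and> h v \<le> 1)
     \<and> (\<forall>x\<in>V. \<forall>y\<in>V. x \<noteq> y \<longrightarrow> sum h (resolving_set1 V E x y) \<ge> 1)"

text \<open>The minimum is attained (finite LP); we write it as an infimum.\<close>
definition frac_dim :: "'a set \<Rightarrow> ('a \<Rightarrow> 'a \<Rightarrow> bool) \<Rightarrow> real" where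
  "frac_dim V E = Inf {sum g V | g. resolving_function V E g}"

definition frac_dim1 :: "'a set \<Rightarrow> ('a \<Rightarrow> 'a \<Rightarrow> bool) \<Rightarrow> real" where
  "frac_dim1 V E = Inf {sum h V | h. trunc_resolving_function V E h}"

definition degree :: "'a set \<Rightarrow> ('a \<Rightarrow> 'a \<Rightarrow> bool) \<Rightarrow> 'a \<Rightarrow> nat" where
  "degree V E v = card {w \<in> V. E v w}"

definition leaves :: "'a set \<Rightarrow> ('a \<Rightarrow> 'a \<Rightarrow> bool) \<Rightarrow> 'a set" where
  "leaves V E = {v \<in> V. degree V E v = 1}"

definition major :: "'a set \<Rightarrow> ('a \<Rightarrow> 'a \<Rightarrow> bool) \<Rightarrow> 'a \<Rightarrow> bool" where
  "major V E v \<longleftrightarrow> v \<in> V \<and> degree V E v \<ge> 3"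

definition terminal_vertices :: "'a set \<Rightarrow> ('a \<Rightarrow> 'a \<Rightarrow> bool) \<Rightarrow> 'a \<Rightarrow> 'a set" where
  "terminal_vertices V E v = {l \<in> leaves V E. \<forall>w. major V E w \<and> w \<noteq> v \<longrightarrow> gdist V E l v < gdist V E l w}"

definition ter :: "'a set \<Rightarrow> ('a \<Rightarrow> 'a \<Rightarrow> bool) \<Rightarrow> 'a \<Rightarrow> nat" where
  "ter V E v = card (terminal_vertices V E v)"

definition exterior_major :: "'a set \<Rightarrow> ('a \<Rightarrow> 'a \<Rightarrow> bool) \<Rightarrow> 'a set" where
  "exterior_major V E = {v. major V E v \<and> ter V E v > 0}"

definition ex_num :: "'a set \<Rightarrow> ('a \<Rightarrow> 'a \<Rightarrow> bool) \<Rightarrow> nat" where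
  "ex_num V E = card (exterior_major V E)"

definition M2 :: "'a set \<Rightarrow> ('a \<Rightarrow> 'a \<Rightarrow> bool) \<Rightarrow> 'a set" where
  "M2 V E = {w \<in> exterior_major V E. ter V E w \<ge> 2}"

definition is_path_graph :: "'a set \<Rightarrow> ('a \<Rightarrow> 'a \<Rightarrow> bool) \<Rightarrow> nat \<Rightarrow> bool" where
  "is_path_graph V E n \<longleftrightarrow> (\<exists>f. bij_betw f {0..<n} V \<and>
     (\<forall>i<n. \<forall>j<n. E (f i) (f j) \<longleftrightarrow> (i = Suc j \<or> j = Suc i)))"

end

theory Submission
  imports Defs
begin

lemma walk_Nil[simp]: "walk E []" by (simp add: walk_def)
lemma walk_single[simp]: "walk E [x]" by (simp add: walk_def)
lemma walk_Cons2[simp]: "walk E (x # y # xs) \<longleftrightarrow> E x y \<and> walk E (y # xs)"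
  unfolding walk_def
  apply (rule iffI)
   apply (intro conjI)
    apply (metis length_Cons nth_Cons_0 nth_Cons_Suc zero_less_Suc Suc_less_eq)
   apply (metis Suc_less_eq length_Cons nth_Cons_Suc)
  apply clarify
  subgoal for i by (cases i) auto
  done

lemma walk_Cons: "walk E (x # xs) \<longleftrightarrow> walk E xs \<and> (xs \<noteq> [] \<longrightarrow> E x (hd xs))"
  by (cases xs) auto

lemma walk_append: "walk E (xs @ ys) \<longleftrightarrow> walk E xs \<and> walk E ys \<and> (xs \<noteq> [] \<and> ys \<noteq> [] \<longrightarrow> E (last xs) (hd ys))"
  by (induction xs) (auto simp: walk_Cons)

lemma walk_rev: "(\<And>x y. E x y \<Longrightarrow> E y x) \<Longrightarrow> walk E xs \<Longrightarrow> walk E (rev xs)"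
  by (induction xs) (auto simp: walk_Cons walk_append hd_rev last_rev)

lemma walk_drop: "walk E xs \<Longrightarrow> walk E (drop i xs)"
  unfolding walk_def by auto

lemma walk_take: "walk E xs \<Longrightarrow> walk E (take i xs)"
  unfolding walk_def by auto

lemma walk_tl: "walk E xs \<Longrightarrow> walk E (tl xs)"
  by (cases xs) (auto simp: walk_Cons)

lemma walk_nth: "walk E xs \<Longrightarrow> Suc i < length xs \<Longrightarrow> E (xs ! i) (xs ! Suc i)"
  unfolding walk_def by auto

locale tree =
  fixes V :: "'a set" and E :: "'a \<Rightarrow> 'a \<Rightarrow> bool"
  assumes T: "is_tree V E"
begin

lemma finV: "finite V" using T by (simp add: is_tree_def)
lemma EV: "E x y \<Longrightarrow> x \<in> V \<and> y \<in> V" using T by (simp add: is_tree_def)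
lemma Esym: "E x y \<Longrightarrow> E y x" using T by (simp add: is_tree_def)
lemma Eirr[simp]: "\<not> E x x" using T by (simp add: is_tree_def)
lemma conn: "connected_graph V E" using T by (simp add: is_tree_def)
lemma acyc: "acyclic_graph V E" using T by (simp add: is_tree_def)

definition wk :: "'a \<Rightarrow> 'a \<Rightarrow> 'a list \<Rightarrow> bool" where
  "wk x y xs \<longleftrightarrow> xs \<noteq> [] \<and> hd xs = x \<and> last xs = y \<and> set xs \<subseteq> V \<and> walk E xs"

lemma wk_exists: "x \<in> V \<Longrightarrow> y \<in> V \<Longrightarrow> \<exists>xs. wk x y xs"
  using conn unfolding connected_graph_def wk_def by blast

lemma gdist_wk: "gdist V E x y = (LEAST n. \<exists>xs. wk x y xs \<and> length xs = Suc n)"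
  unfolding gdist_def wk_def by simp

lemma gdist_le: "wk x y xs \<Longrightarrow> gdist V E x y \<le> length xs - 1"
  unfolding gdist_wk
  by (rule Least_le) (auto simp: wk_def)

lemma gdist_geo: assumes "x \<in> V" "y \<in> V"
  shows "\<exists>xs. wk x y xs \<and> length xs = Suc (gdist V E x y)"
proof -
  obtain xs where "wk x y xs" using wk_exists assms by blast
  then have "wk x y xs \<and> length xs = Suc (length xs - 1)" by (cases xs) (auto simp: wk_def)
  then have "\<exists>n xs. wk x y xs \<and> length xs = Suc n" by blast
  then show ?thesis unfolding gdist_wk by (rule LeastI_ex)
qed

lemma wk_rev: "wk x y xs \<Longrightarrow> wk y x (rev xs)"
  unfolding wk_def by (auto simp: hd_rev last_rev intro: walk_rev Esym)

lemma gdist_sym: "gdist V E x y = gdist V E y x"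
proof -
  have *: "gdist V E y x \<le> gdist V E x y" if "x \<in> V" "y \<in> V" for x y
  proof -
    from gdist_geo[OF that] obtain xs where xs: "wk x y xs" "length xs = Suc (gdist V E x y)" by blast
    show ?thesis using gdist_le[OF wk_rev[OF xs(1)]] xs(2) by simp
  qed
  show ?thesis
  proof (cases "x \<in> V \<and> y \<in> V")
    case True then show ?thesis using * by (meson le_antisym)
  next
    case False
    then have "\<not> (\<exists>xs. wk x y xs)" "\<not> (\<exists>xs. wk y x xs)"
      unfolding wk_def by (metis hd_in_set last_in_set subsetD)+
    then show ?thesis unfolding gdist_wk by metis
  qed
qed

lemma wk_append: "wk x y xs \<Longrightarrow> wk y z ys \<Longrightarrow> wk x z (xs @ tl ys)"
  unfolding wk_def
  apply (cases ys)
   apply simp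
  apply (auto simp: walk_append walk_Cons)
  done

lemma gdist_tri: assumes "x \<in> V" "y \<in> V" "z \<in> V"
  shows "gdist V E x z \<le> gdist V E x y + gdist V E y z"
proof -
  obtain xs where 1: "wk x y xs" "length xs = Suc (gdist V E x y)" using gdist_geo assms by blast
  obtain ys where 2: "wk y z ys" "length ys = Suc (gdist V E y z)" using gdist_geo assms by blast
  have "wk x z (xs @ tl ys)" by (rule wk_append[OF 1(1) 2(1)])
  from gdist_le[OF this] show ?thesis using 1 2 by simp
qed

lemma gdist_refl[simp]: "x \<in> V \<Longrightarrow> gdist V E x x = 0"
proof -
  assume "x \<in> V"
  then have "wk x x [x]" by (simp add: wk_def)
  from gdist_le[OF this] show ?thesis by simp
qed

lemma gdist_0: assumes "x \<in> V" "y \<in> V" "gdist V E x y = 0" shows "x = y"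
proof -
  obtain xs where "wk x y xs" "length xs = Suc 0" using gdist_geo assms by fastforce
  then show ?thesis by (cases xs) (auto simp: wk_def)
qed

lemma gdist_E: assumes "E x y" shows "gdist V E x y = 1"
proof -
  have "wk x y [x, y]" using assms EV by (auto simp: wk_def)
  from gdist_le[OF this] have "gdist V E x y \<le> 1" by simp
  moreover have "gdist V E x y \<noteq> 0" using gdist_0 EV assms by fastforce
  ultimately show ?thesis by simp
qed

lemma gdist_1: assumes "x \<in> V" "y \<in> V" "gdist V E x y = 1" shows "E x y"
proof -
  obtain xs where "wk x y xs" "length xs = 2" using gdist_geo assms by fastforce
  then show ?thesis by (cases xs; cases "tl xs") (auto simp: wk_def)
qed

lemma gdist1_code: assumes "x \<in> V" "z \<in> V"
  shows "gdist1 V E x z = (if z = x then 0 else if E x z then 1 else 2)"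
proof -
  have "gdist V E x z \<ge> 2" if "z \<noteq> x" "\<not> E x z"
    using gdist_0[OF assms] gdist_1[OF assms] that by (metis One_nat_def less_2_cases not_le)
  then show ?thesis unfolding gdist1_def using gdist_E assms by auto
qed

lemma R1_char: assumes "x \<in> V" "y \<in> V" "x \<noteq> y"
  shows "resolving_set1 V E x y = {x, y} \<union> {z \<in> V. E x z \<noteq> E y z}"
  unfolding resolving_set1_def using assms
  by (auto simp: gdist1_code split: if_splits)

end


definition nbk :: "'a list \<Rightarrow> bool" where
  "nbk xs \<longleftrightarrow> (\<forall>i. Suc (Suc i) < length xs \<longrightarrow> xs ! i \<noteq> xs ! Suc (Suc i))"

lemma distinct_nbk: "distinct xs \<Longrightarrow> nbk xs"
  unfolding nbk_def by (simp add: nth_eq_iff_index_eq)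

lemma nbk_append:
  assumes "nbk A" "nbk B"
    "2 \<le> length A \<Longrightarrow> B \<noteq> [] \<Longrightarrow> A ! (length A - 2) \<noteq> hd B"
    "A \<noteq> [] \<Longrightarrow> 2 \<le> length B \<Longrightarrow> last A \<noteq> B ! 1"
  shows "nbk (A @ B)"
  unfolding nbk_def
proof (intro allI impI)
  fix i assume i: "Suc (Suc i) < length (A @ B)"
  consider "Suc (Suc i) < length A" | "i \<ge> length A" | "i = length A - 2" "length A \<ge> 2" | "i = length A - 1" "length A \<ge> 1"
    by linarith
  then show "(A @ B) ! i \<noteq> (A @ B) ! Suc (Suc i)"
  proof cases
    case 1 then show ?thesis using assms(1) by (simp add: nth_append nbk_def)
  next
    case 2
    then have "Suc (Suc (i - length A)) < length B" using i by simp
    then have "B ! (i - length A) \<noteq> B ! Suc (Suc (i - length A))" using assms(2) by (simp add: nbk_def)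
    moreover have "Suc (Suc i) - length A = Suc (Suc (i - length A))" using 2 by simp
    ultimately show ?thesis using 2 by (simp add: nth_append)
  next
    case 3
    then have "B \<noteq> []" using i by auto
    then have "A ! (length A - 2) \<noteq> B ! 0" using assms(3) 3 by (simp add: hd_conv_nth)
    moreover have "i < length A" using 3 by simp
    then have "(A @ B) ! i = A ! (length A - 2)" using 3 by (simp add: nth_append)
    moreover have "Suc (Suc i) = length A" using 3 by simp
    then have "(A @ B) ! Suc (Suc i) = B ! 0" by (simp add: nth_append)
    ultimately show ?thesis by simp
  next
    case 4
    then have "2 \<le> length B" using i by auto
    moreover have "A \<noteq> []" using 4 by auto
    ultimately have "last A \<noteq> B ! 1" using assms(4) by blast
    then have "A ! (length A - 1) \<noteq> B ! 1" using \<open>A \<noteq> []\<close> by (simp add: last_conv_nth)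
    moreover have "i < length A" using 4 by simp
    then have "(A @ B) ! i = A ! (length A - 1)" using 4 by (simp add: nth_append)
    moreover have "(A @ B) ! Suc (Suc i) = B ! 1"
    proof -
      have "\<not> Suc (Suc i) < length A" "Suc (Suc i) - length A = 1" using 4 by simp_all
      then show ?thesis by (simp add: nth_append)
    qed
    ultimately show ?thesis by simp
  qed
qed

lemma distinct_hd_last: "distinct xs \<Longrightarrow> 2 \<le> length xs \<Longrightarrow> hd xs \<noteq> last xs"
  by (cases xs) (auto simp: last_in_set)

context tree begin

abbreviation "L \<equiv> leaves V E"
abbreviation "N v \<equiv> {w \<in> V. E v w}"

lemma closure:
  assumes "C \<subseteq> V" "c \<in> C" "\<And>x y. x \<in> C \<Longrightarrow> E x y \<Longrightarrow> y \<in> C"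
  shows "C = V"
proof
  show "V \<subseteq> C"
  proof
    fix v assume "v \<in> V"
    then obtain xs where xs: "wk c v xs" using wk_exists assms by blast
    have "xs ! i \<in> C" if "i < length xs" for i
      using that
    proof (induction i)
      case 0 then show ?case using xs assms(2) by (auto simp: wk_def hd_conv_nth)
    next
      case (Suc i)
      then have "E (xs ! i) (xs ! Suc i)" using xs by (auto simp: wk_def intro: walk_nth)
      then show ?case using Suc assms(3) by auto
    qed
    then show "v \<in> C" using xs by (auto simp: wk_def last_conv_nth)
  qed
qed (use assms in auto)

lemma leafD: assumes "l \<in> L" shows "\<exists>!w. E l w"
proof -
  have "card (N l) = 1" using assms by (simp add: leaves_def degree_def)
  then obtain w where w: "N l = {w}" by (auto simp: card_1_singleton_iff)
  have "E l w" using w by blast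
  moreover have "w' = w" if "E l w'" for w'
  proof -
    have "w' \<in> N l" using that EV by blast
    then show ?thesis using w by blast
  qed
  ultimately show ?thesis by blast
qed

definition nb :: "'a \<Rightarrow> 'a" where "nb l = (THE w. E l w)"

lemma nb: assumes "l \<in> L" shows "E l (nb l)" "E l w \<Longrightarrow> w = nb l"
proof -
  show 1: "E l (nb l)" unfolding nb_def using leafD[OF assms] by (rule theI')
  show "E l w \<Longrightarrow> w = nb l" using leafD[OF assms] 1 by blast
qed

lemma L_V: "l \<in> L \<Longrightarrow> l \<in> V" by (simp add: leaves_def)

lemma nb_V: "l \<in> L \<Longrightarrow> nb l \<in> V" using nb(1) EV by metis

lemma nb_ne: "l \<in> L \<Longrightarrow> nb l \<noteq> l" using nb(1) Eirr by metis

lemma leaf_leaf: assumes "l \<in> L" "nb l \<in> L" shows "V = {l, nb l}"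
proof -
  have "{l, nb l} = V"
  proof (rule closure)
    show "{l, nb l} \<subseteq> V" using assms L_V by auto
  next
    fix x y assume xy: "x \<in> {l, nb l}" "E x y"
    show "y \<in> {l, nb l}"
    proof (cases "x = l")
      case True then show ?thesis using nb(2)[OF assms(1)] xy by blast
    next
      case False
      then have "x = nb l" using xy by blast
      then have "y = nb (nb l)" using nb(2)[OF assms(2)] xy by blast
      moreover have "l = nb (nb l)" using nb(2)[OF assms(2)] nb(1)[OF assms(1)] Esym by blast
      ultimately show ?thesis by simp
    qed
  qed auto
  then show ?thesis by simp
qed

lemma nb_internal: assumes "card V \<ge> 3" "l \<in> L" shows "nb l \<notin> L"
proof
  assume "nb l \<in> L"
  then have "V = {l, nb l}" using leaf_leaf assms by blast
  moreover have "card {l, nb l} \<le> 2" by (simp add: card_insert_if)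
  ultimately have "card V \<le> 2" by simp
  then show False using assms by simp
qed

lemma has_nbr: assumes "card V \<ge> 2" "z \<in> V" shows "\<exists>w. E z w"
proof -
  have "V - {z} \<noteq> {}"
  proof
    assume "V - {z} = {}"
    then have "V \<subseteq> {z}" by blast
    then have "card V \<le> card {z}" by (intro card_mono) auto
    then show False using assms by simp
  qed
  then obtain y where y: "y \<in> V" "y \<noteq> z" by blast
  obtain xs where xs: "wk z y xs" using wk_exists y assms by blast
  then have l: "Suc 0 < length xs" using y by (cases xs) (auto simp: wk_def)
  have "E (xs ! 0) (xs ! Suc 0)" using xs l walk_nth[of E xs 0] unfolding wk_def by auto
  moreover have "xs ! 0 = z" using xs by (auto simp: wk_def hd_conv_nth)
  ultimately show ?thesis by blast
qed

lemma nb_distinct: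
  assumes "walk E xs" "set xs \<subseteq> V" "nbk xs" shows "distinct xs"
  using assms
proof (induction xs rule: rev_induct)
  case Nil then show ?case by simp
next
  case (snoc y xs)
  have nxs: "nbk xs" unfolding nbk_def
  proof (intro allI impI)
    fix i assume i: "Suc (Suc i) < length xs"
    have h: "Suc (Suc i) < length (xs @ [y]) \<longrightarrow> (xs @ [y]) ! i \<noteq> (xs @ [y]) ! Suc (Suc i)"
      using snoc.prems(3) unfolding nbk_def by (rule spec)
    have "Suc (Suc i) < length (xs @ [y])" using i by simp
    with h have "(xs @ [y]) ! i \<noteq> (xs @ [y]) ! Suc (Suc i)" by (rule mp)
    then show "xs ! i \<noteq> xs ! Suc (Suc i)" using i by (simp add: nth_append)
  qed
  have wxs: "walk E xs" using snoc.prems(1) by (simp add: walk_append)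
  have dxs: "distinct xs" using snoc.IH[OF wxs _ nxs] snoc.prems(2) by simp
  show ?case
  proof (rule ccontr)
    assume "\<not> distinct (xs @ [y])"
    then have "y \<in> set xs" using dxs by simp
    then obtain i where i: "i < length xs" "xs ! i = y" by (auto simp: in_set_conv_nth)
    have ne: "xs \<noteq> []" using i by auto
    have Ely: "E (last xs) y" using snoc.prems(1) ne by (simp add: walk_append)
    consider "length xs - i = 1" | "length xs - i = 2" | "length xs - i \<ge> 3" using i by linarith
    then show False
    proof cases
      case 1
      then have "i = length xs - 1" by simp
      then have "last xs = y" using i ne by (simp add: last_conv_nth)
      then show False using Ely by simp
    next
      case 2
      then have "Suc (Suc i) < length (xs @ [y])" by simp
      then have "(xs @ [y]) ! i \<noteq> (xs @ [y]) ! Suc (Suc i)" using snoc.prems(3) by (simp add: nbk_def)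
      moreover have "Suc (Suc i) = length xs" using 2 i by simp
      ultimately show False using i by (simp add: nth_append)
    next
      case 3
      let ?c = "drop i xs"
      have "length ?c \<ge> 3" using 3 by simp
      moreover have "distinct ?c" using dxs by simp
      moreover have "set ?c \<subseteq> V" using snoc.prems(2) by (auto dest: in_set_dropD)
      moreover have "walk E ?c" using wxs by (rule walk_drop)
      moreover have "last ?c = last xs" using i by simp
      moreover have "hd ?c = y" using i by (simp add: hd_drop_conv_nth)
      ultimately have ex: "\<exists>c. length c \<ge> 3 \<and> distinct c \<and> set c \<subseteq> V \<and> walk E c \<and> E (last c) (hd c)"
        using Ely by (intro exI[of _ ?c]) simp
      have nc: "\<not> (\<exists>c. length c \<ge> 3 \<and> distinct c \<and> set c \<subseteq> V \<and> walk E c \<and> E (last c) (hd c))"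
        using acyc unfolding acyclic_graph_def .
      show False using nc ex by (rule notE)
    qed
  qed
qed

lemma geo_dist:
  assumes "wk x t P" "length P = Suc (gdist V E x t)" "i < length P"
  shows "gdist V E (P ! i) t = gdist V E x t - i"
proof -
  have P: "P \<noteq> []" "hd P = x" "last P = t" "set P \<subseteq> V" "walk E P" using assms(1) by (simp_all add: wk_def)
  have xV: "x \<in> V" using P hd_in_set by blast
  have tV: "t \<in> V" using P last_in_set by blast
  have PiV: "P ! i \<in> V" using P assms(3) nth_mem by blast
  have "set (drop i P) \<subseteq> V" by (rule subset_trans[OF set_drop_subset P(4)])
  moreover have "drop i P \<noteq> []" using assms(3) by simp
  moreover have "hd (drop i P) = P ! i" using assms(3) by (simp add: hd_drop_conv_nth)
  moreover have "last (drop i P) = t" using assms(3) P by simp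
  ultimately have "wk (P ! i) t (drop i P)" using walk_drop[OF P(5)] by (simp add: wk_def)
  from gdist_le[OF this] have 1: "gdist V E (P ! i) t \<le> gdist V E x t - i" using assms by simp
  have lt: "last (take (Suc i) P) = P ! i" using assms(3)
    by (simp add: take_Suc_conv_app_nth)
  have "set (take (Suc i) P) \<subseteq> V" by (rule subset_trans[OF set_take_subset P(4)])
  then have "wk x (P ! i) (take (Suc i) P)" using P lt walk_take[OF P(5)]
    by (simp add: wk_def)
  from gdist_le[OF this] have "gdist V E x (P ! i) \<le> i" using assms by simp
  with gdist_tri[OF xV PiV tV] have "gdist V E x t \<le> i + gdist V E (P ! i) t" by simp
  with 1 show ?thesis by simp
qed

lemma geo_distinct:
  assumes "wk x t P" "length P = Suc (gdist V E x t)" shows "distinct P"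
  unfolding distinct_conv_nth
proof (intro allI impI)
  fix i j assume "i < length P" "j < length P" "i \<noteq> j"
  then show "P ! i \<noteq> P ! j" using geo_dist[OF assms, of i] geo_dist[OF assms, of j] assms(2) by auto
qed

lemma lemmaU:
  assumes tV: "t \<in> V" and zV: "z \<in> V" and e1: "E z u1" and e2: "E z u2" and ne: "u1 \<noteq> u2"
    and f1: "gdist V E u1 t < gdist V E z t" and f2: "gdist V E u2 t \<le> gdist V E z t"
  shows False
proof -
  have u1V: "u1 \<in> V" and u2V: "u2 \<in> V" using e1 e2 EV by auto
  obtain P1 where P1: "wk u1 t P1" "length P1 = Suc (gdist V E u1 t)" using gdist_geo u1V tV by blast
  obtain P2 where P2: "wk u2 t P2" "length P2 = Suc (gdist V E u2 t)" using gdist_geo u2V tV by blast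
  have d1: "distinct P1" using geo_distinct P1 by blast
  have d2: "distinct P2" using geo_distinct P2 by blast
  have zP2: "z \<notin> set P2"
  proof
    assume "z \<in> set P2"
    then obtain i where i: "i < length P2" "P2 ! i = z" by (auto simp: in_set_conv_nth)
    have "gdist V E z t = gdist V E u2 t - i" using geo_dist[OF P2 i(1)] i(2) by simp
    then have "i = 0" using f2 i P2(2) by linarith
    then have "z = u2" using i P2 by (auto simp: wk_def hd_conv_nth)
    then show False using e2 by simp
  qed
  let ?W = "rev P1 @ z # P2"
  have "nbk ?W"
  proof (rule nbk_append)
    show "nbk (rev P1)" using d1 by (simp add: distinct_nbk)
    show "nbk (z # P2)" using d2 zP2 by (simp add: distinct_nbk)
  next
    assume "2 \<le> length (rev P1)"
    then have l: "1 < length P1" by simp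
    have "rev P1 ! (length (rev P1) - 2) = P1 ! 1" using l by (simp add: rev_nth)
    moreover have "gdist V E (P1 ! 1) t < gdist V E z t" using geo_dist[OF P1 l] f1 by simp
    ultimately show "rev P1 ! (length (rev P1) - 2) \<noteq> hd (z # P2)" by auto
  next
    assume "rev P1 \<noteq> []"
    then show "last (rev P1) \<noteq> (z # P2) ! 1" using P1 P2 ne
      by (auto simp: wk_def last_rev hd_conv_nth)
  qed
  moreover have "walk E ?W"
  proof -
    have "walk E (rev P1)" using P1 by (auto simp: wk_def intro: walk_rev[OF Esym])
    moreover have "E u1 z" using e1 by (rule Esym)
    moreover have "walk E (z # P2)" using P2 e2 by (auto simp: wk_def walk_Cons)
    ultimately show ?thesis using P1 by (auto simp: wk_def walk_append last_rev)
  qed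
  moreover have "set ?W \<subseteq> V" using P1 P2 zV by (auto simp: wk_def)
  ultimately have "distinct ?W" by (rule nb_distinct[rotated 2])
  moreover have "hd ?W = t" "last ?W = t" using P1 P2 by (auto simp: wk_def hd_rev)
  moreover have "2 \<le> length ?W" using P1 by (cases P1) (auto simp: wk_def)
  ultimately show False using distinct_hd_last by metis
qed

lemma down_nbr:
  assumes "t \<in> V" "z \<in> V" "z \<noteq> t"
  shows "\<exists>d. E z d \<and> gdist V E d t < gdist V E z t \<and>
          (\<forall>u. E z u \<and> u \<noteq> d \<longrightarrow> gdist V E u t = Suc (gdist V E z t))"
proof -
  obtain P where P: "wk z t P" "length P = Suc (gdist V E z t)" using gdist_geo assms by blast
  have "gdist V E z t \<noteq> 0" using gdist_0 assms by blast
  then have l: "1 < length P" using P by simp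
  let ?d = "P ! 1"
  have "E (P ! 0) (P ! Suc 0)" using P l walk_nth[of E P 0] by (simp add: wk_def)
  moreover have "P ! 0 = z" using P by (auto simp: wk_def hd_conv_nth)
  ultimately have Ed: "E z ?d" by simp
  have fd: "gdist V E ?d t < gdist V E z t" using geo_dist[OF P l] \<open>gdist V E z t \<noteq> 0\<close> by simp
  have "gdist V E u t = Suc (gdist V E z t)" if "E z u" "u \<noteq> ?d" for u
  proof -
    have uV: "u \<in> V" using that EV by auto
    have "gdist V E u t \<le> gdist V E u z + gdist V E z t" using gdist_tri uV assms by blast
    moreover have "gdist V E u z = 1" using gdist_E Esym that by blast
    moreover have "\<not> gdist V E u t \<le> gdist V E z t"
      using lemmaU[OF assms(1,2) Ed that(1) _ fd] that(2) by blast
    ultimately show ?thesis by simp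
  qed
  then show ?thesis using Ed fd by blast
qed

lemma leaf_resolves:
  assumes xV: "x \<in> V" and yV: "y \<in> V" and xy: "x \<noteq> y" and c2: "card V \<ge> 2"
  shows "\<exists>l\<in>L. gdist V E l x < gdist V E l y"
proof -
  let ?A = "{z \<in> V. gdist V E z y = gdist V E z x + gdist V E x y}"
  have xA: "x \<in> ?A" using xV by simp
  have fA: "finite ?A" using finV by simp
  obtain z where zA: "z \<in> ?A" and zmax: "\<And>z'. z' \<in> ?A \<Longrightarrow> gdist V E z' x \<le> gdist V E z x"
  proof -
    let ?m = "Max ((\<lambda>z. gdist V E z x) ` ?A)"
    have "?m \<in> (\<lambda>z. gdist V E z x) ` ?A" using fA xA by (intro Max_in) auto
    then obtain z where z1: "?m = gdist V E z x" and z2: "z \<in> ?A" by (rule imageE)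
    have "gdist V E z' x \<le> gdist V E z x" if "z' \<in> ?A" for z'
      unfolding z1[symmetric] using fA that by (intro Max_ge) auto
    then show ?thesis using that z2 by blast
  qed
  have zV: "z \<in> V" using zA by simp
  have dxy: "gdist V E x y \<ge> 1" using gdist_0 xV yV xy by (metis less_one not_le)
  have zy: "z \<noteq> y"
  proof
    assume "z = y" then show False using zA dxy yV by simp
  qed
  obtain dy where dy: "E z dy" "gdist V E dy y < gdist V E z y"
     "\<And>u. E z u \<Longrightarrow> u \<noteq> dy \<Longrightarrow> gdist V E u y = Suc (gdist V E z y)"
    using down_nbr[OF yV zV zy] by blast
  have atmost: "u1 = u2" if uu: "E z u1" "E z u2" for u1 u2
  proof (rule ccontr)
    assume ne: "u1 \<noteq> u2"
    show False
    proof (cases "z = x")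
      case True
      have "\<exists>u. E z u \<and> u \<noteq> dy" using uu ne by blast
      then obtain u where u: "E z u" "u \<noteq> dy" by blast
      have "gdist V E u y = Suc (gdist V E x y)" using dy(3)[OF u] True xV by simp
      moreover have "gdist V E u x = 1" using gdist_E Esym u True by blast
      ultimately have "u \<in> ?A" using u EV by auto
      from zmax[OF this] show False using \<open>gdist V E u x = 1\<close> True xV by simp
    next
      case False
      obtain dx where dx: "E z dx" "gdist V E dx x < gdist V E z x"
        "\<And>u. E z u \<Longrightarrow> u \<noteq> dx \<Longrightarrow> gdist V E u x = Suc (gdist V E z x)"
        using down_nbr[OF xV zV False] by blast
      have dxV: "dx \<in> V" using dx EV by auto
      have "gdist V E dx y \<le> gdist V E dx x + gdist V E x y" using gdist_tri dxV xV yV by blast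
      then have "gdist V E dx y < gdist V E z y" using dx(2) zA by simp
      then have "dx = dy" using dy(3)[OF dx(1)] by fastforce
      have "\<exists>u. E z u \<and> u \<noteq> dx" using uu ne by blast
      then obtain u where u: "E z u" "u \<noteq> dx" by blast
      have "gdist V E u x = Suc (gdist V E z x)" using dx(3)[OF u] .
      moreover have "gdist V E u y = Suc (gdist V E z y)" using dy(3) u \<open>dx = dy\<close> by blast
      ultimately have "u \<in> ?A" using u EV zA by auto
      from zmax[OF this] show False using \<open>gdist V E u x = Suc (gdist V E z x)\<close> by simp
    qed
  qed
  have "N z = {dy}" using dy(1) atmost EV by blast
  then have "z \<in> L" using zV by (simp add: leaves_def degree_def)
  moreover have "gdist V E z x < gdist V E z y" using zA dxy by simp
  ultimately show ?thesis by blast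
qed

lemma twin_dist:
  assumes l: "l \<in> L" and zV: "z \<in> V" and zl: "z \<noteq> l"
  shows "gdist V E l z = Suc (gdist V E (nb l) z)"
proof -
  have lV: "l \<in> V" and wV: "nb l \<in> V" using l L_V nb_V by auto
  obtain P where P: "wk (nb l) z P" "length P = Suc (gdist V E (nb l) z)" using gdist_geo wV zV by blast
  have "wk l z (l # P)" using P nb(1)[OF l] lV by (auto simp: wk_def walk_Cons)
  from gdist_le[OF this] have 1: "gdist V E l z \<le> Suc (gdist V E (nb l) z)" using P by simp
  obtain Q where Q: "wk l z Q" "length Q = Suc (gdist V E l z)" using gdist_geo lV zV by blast
  obtain Q' where Q': "Q = l # Q'" using Q by (cases Q) (auto simp: wk_def)
  have "Q' \<noteq> []" using Q Q' zl by (auto simp: wk_def)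
  then have "E l (hd Q')" using Q Q' by (auto simp: wk_def walk_Cons)
  then have "hd Q' = nb l" using nb(2)[OF l] by blast
  then have "wk (nb l) z Q'" using Q Q' \<open>Q' \<noteq> []\<close> by (auto simp: wk_def walk_Cons)
  from gdist_le[OF this] have "gdist V E (nb l) z \<le> length Q' - 1" .
  moreover have "length Q' \<ge> 1" using \<open>Q' \<noteq> []\<close> by (cases Q') auto
  moreover have "length Q' = gdist V E l z" using Q Q' by simp
  ultimately show ?thesis using 1 by linarith
qed

end


lemma clique_sum:
  fixes c :: "'b \<Rightarrow> real"
  assumes fin: "finite G" and c2: "card G \<ge> 2"
    and pw: "\<And>x y. x \<in> G \<Longrightarrow> y \<in> G \<Longrightarrow> x \<noteq> y \<Longrightarrow> c x + c y \<ge> 1"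
  shows "sum c G \<ge> card G / 2"
proof -
  let ?n = "real (card G)" and ?S = "sum c G"
  have eq: "sum (\<lambda>y. c x + c y) (G - {x}) = (?n - 1) * c x + (?S - c x)" if "x \<in> G" for x
  proof -
    have a: "sum (\<lambda>y. c x + c y) (G - {x}) = sum (\<lambda>y. c x) (G - {x}) + sum c (G - {x})"
      by (simp add: sum.distrib)
    have "card G \<ge> 1" using that fin by (metis One_nat_def Suc_leI card_gt_0_iff empty_iff)
    then have b: "sum (\<lambda>y. c x) (G - {x}) = (?n - 1) * c x" using that fin by (simp add: of_nat_diff)
    have d: "sum c (G - {x}) = ?S - c x" using that fin by (simp add: sum_diff1)
    show ?thesis using a b d by simp
  qed
  have ge: "sum (\<lambda>y. c x + c y) (G - {x}) \<ge> ?n - 1" if "x \<in> G" for x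
  proof -
    have "sum (\<lambda>y. c x + c y) (G - {x}) \<ge> sum (\<lambda>y. 1) (G - {x})"
      using pw that by (intro sum_mono) auto
    moreover have "card G \<ge> 1" using that fin by (metis One_nat_def Suc_leI card_gt_0_iff empty_iff)
    then have "sum (\<lambda>y. 1::real) (G - {x}) = ?n - 1" using that fin by (simp add: of_nat_diff)
    ultimately show ?thesis by simp
  qed
  have "sum (\<lambda>x. (?n - 1) * c x + (?S - c x)) G \<ge> sum (\<lambda>x. ?n - 1) G"
    using eq ge by (intro sum_mono) simp
  moreover have "sum (\<lambda>x. (?n - 1) * c x + (?S - c x)) G = (?n - 1) * ?S + ?n * ?S - ?S"
    by (simp add: sum.distrib sum_subtractf sum_distrib_left[symmetric])
  moreover have "sum (\<lambda>x. ?n - 1) G = ?n * (?n - 1)" by simp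
  ultimately have "2 * (?n - 1) * ?S \<ge> ?n * (?n - 1)" by (simp add: algebra_simps)
  moreover have "?n - 1 > 0" using c2 by simp
  ultimately have "2 * ?S \<ge> ?n" by (metis mult.commute mult.left_commute mult_le_cancel_left_pos)
  then show ?thesis by simp
qed

lemma group_sum:
  fixes c :: "'b \<Rightarrow> real" and f :: "'b \<Rightarrow> 'k"
  assumes fin: "finite X"
    and g2: "\<And>x. x \<in> X \<Longrightarrow> card {y \<in> X. f y = f x} \<ge> 2"
    and pw: "\<And>x y. x \<in> X \<Longrightarrow> y \<in> X \<Longrightarrow> x \<noteq> y \<Longrightarrow> f x = f y \<Longrightarrow> c x + c y \<ge> 1"
  shows "sum c X \<ge> card X / 2"
proof -
  have s: "sum c X = (\<Sum>k\<in>f ` X. sum c {x \<in> X. f x = k})"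
    using fin by (rule sum.image_gen)
  have cX: "real (card X) = (\<Sum>k\<in>f ` X. real (card {x \<in> X. f x = k}))"
  proof -
    have "real (card X) = sum (\<lambda>x. 1::real) X" by simp
    also have "\<dots> = (\<Sum>k\<in>f ` X. sum (\<lambda>x. 1::real) {x \<in> X. f x = k})"
      using fin by (rule sum.image_gen)
    finally show ?thesis by simp
  qed
  have "(\<Sum>k\<in>f ` X. real (card {x \<in> X. f x = k}) / 2) \<le> (\<Sum>k\<in>f ` X. sum c {x \<in> X. f x = k})"
  proof (rule sum_mono)
    fix k assume "k \<in> f ` X"
    then obtain x where x: "x \<in> X" "k = f x" by (rule imageE)
    show "real (card {x \<in> X. f x = k}) / 2 \<le> sum c {x \<in> X. f x = k}"
    proof (rule clique_sum)
      show "finite {x \<in> X. f x = k}" using fin by simp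
      show "2 \<le> card {x \<in> X. f x = k}" using g2[OF x(1)] x(2) by simp
    next
      fix a b assume "a \<in> {x \<in> X. f x = k}" "b \<in> {x \<in> X. f x = k}" "a \<noteq> b"
      then show "1 \<le> c a + c b" using pw by simp
    qed
  qed
  then show ?thesis using s cX by (simp add: sum_divide_distrib[symmetric])
qed

lemma fd_le: assumes "resolving_function V E g" "finite V"
  shows "frac_dim V E \<le> sum g V"
  unfolding frac_dim_def
proof (rule cInf_lower)
  show "sum g V \<in> {sum g V |g. resolving_function V E g}" using assms by blast
  show "bdd_below {sum g V |g. resolving_function V E g}"
    unfolding bdd_below_def resolving_function_def
    by (rule exI[of _ 0]) (auto intro: sum_nonneg)
qed

lemma fd1_le: assumes "trunc_resolving_function V E g" "finite V"
  shows "frac_dim1 V E \<le> sum g V"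
  unfolding frac_dim1_def
proof (rule cInf_lower)
  show "sum g V \<in> {sum g V |g. trunc_resolving_function V E g}" using assms by blast
  show "bdd_below {sum g V |g. trunc_resolving_function V E g}"
    unfolding bdd_below_def trunc_resolving_function_def
    by (rule exI[of _ 0]) (auto intro: sum_nonneg)
qed

lemma fd_ge: assumes "resolving_function V E g0"
  and "\<And>g. resolving_function V E g \<Longrightarrow> c \<le> sum g V"
  shows "c \<le> frac_dim V E"
  unfolding frac_dim_def
  by (rule cInf_greatest) (use assms in auto)

lemma fd1_ge: assumes "trunc_resolving_function V E g0"
  and "\<And>g. trunc_resolving_function V E g \<Longrightarrow> c \<le> sum g V"
  shows "c \<le> frac_dim1 V E"
  unfolding frac_dim1_def
  by (rule cInf_greatest) (use assms in auto)

context tree begin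

definition LR :: bool where
  "LR \<longleftrightarrow> (\<forall>w\<in>V. w \<notin> L \<longrightarrow> card {l \<in> L. E w l} \<ge> 2)"

lemma finL: "finite L" using finV by (simp add: leaves_def)

lemma R1_sub_R: "resolving_set1 V E x y \<subseteq> resolving_set V E x y"
  unfolding resolving_set1_def resolving_set_def gdist1_def by auto

lemma trunc_resolving: "trunc_resolving_function V E h \<Longrightarrow> resolving_function V E h"
  unfolding trunc_resolving_function_def resolving_function_def
proof (intro conjI ballI impI)
  fix x y assume h: "(\<forall>v\<in>V. 0 \<le> h v \<and> h v \<le> 1) \<and> (\<forall>x\<in>V. \<forall>y\<in>V. x \<noteq> y \<longrightarrow> 1 \<le> sum h (resolving_set1 V E x y))"
    and xy: "x \<in> V" "y \<in> V" "x \<noteq> y"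
  have "sum h (resolving_set1 V E x y) \<le> sum h (resolving_set V E x y)"
    using h R1_sub_R finV by (intro sum_mono2) (auto simp: resolving_set_def)
  moreover have "1 \<le> sum h (resolving_set1 V E x y)" using h xy by auto
  ultimately show "1 \<le> sum h (resolving_set V E x y)" by linarith
qed auto

lemma one_trunc: assumes "card V \<ge> 2" shows "trunc_resolving_function V E (\<lambda>_. 1)"
  unfolding trunc_resolving_function_def
proof (intro conjI ballI impI)
  fix x y assume xy: "x \<in> V" "y \<in> V" "x \<noteq> y"
  have "x \<in> resolving_set1 V E x y" using xy R1_char by auto
  moreover have "finite (resolving_set1 V E x y)" using finV by (simp add: resolving_set1_def)
  ultimately have "card (resolving_set1 V E x y) \<ge> 1"
    by (metis One_nat_def Suc_leI card_gt_0_iff empty_iff)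
  then show "1 \<le> sum (\<lambda>_. 1::real) (resolving_set1 V E x y)" by simp
qed auto

lemma fd_le_fd1: assumes "card V \<ge> 2" shows "frac_dim V E \<le> frac_dim1 V E"
  using one_trunc[OF assms] by (rule fd1_ge) (intro fd_le trunc_resolving finV)

definition hL :: "'a \<Rightarrow> real" where "hL v = (if v \<in> L then 1/2 else 0)"

lemma sum_hL: "sum hL V = card L / 2"
proof -
  have "sum hL V = sum (\<lambda>v. 1/2) (V \<inter> L)"
    unfolding hL_def using finV by (simp add: sum.If_cases)
  also have "V \<inter> L = L" by (auto simp: leaves_def)
  finally show ?thesis by simp
qed

lemma hL_two: assumes "finite R" "l1 \<in> R" "l2 \<in> R" "l1 \<in> L" "l2 \<in> L" "l1 \<noteq> l2"
  shows "sum hL R \<ge> 1"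
proof -
  have "sum hL {l1, l2} \<le> sum hL R" using assms by (intro sum_mono2) (auto simp: hL_def)
  moreover have "sum hL {l1, l2} = 1" using assms by (simp add: hL_def)
  ultimately show ?thesis by simp
qed

lemma fd_upper: assumes "card V \<ge> 2" shows "frac_dim V E \<le> card L / 2"
proof -
  have "resolving_function V E hL"
    unfolding resolving_function_def
  proof (intro conjI ballI impI)
    fix x y assume xy: "x \<in> V" "y \<in> V" "x \<noteq> y"
    obtain l1 where l1: "l1 \<in> L" "gdist V E l1 x < gdist V E l1 y"
      using leaf_resolves[OF xy assms] by blast
    obtain l2 where l2: "l2 \<in> L" "gdist V E l2 y < gdist V E l2 x"
      using leaf_resolves[OF xy(2,1) _ assms] xy by metis
    have "l1 \<in> resolving_set V E x y" using l1 L_V[OF l1(1)]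
      by (auto simp: resolving_set_def gdist_sym)
    moreover have "l2 \<in> resolving_set V E x y" using l2 L_V[OF l2(1)]
      by (auto simp: resolving_set_def gdist_sym)
    moreover have "l1 \<noteq> l2" using l1 l2 by auto
    ultimately show "1 \<le> sum hL (resolving_set V E x y)"
      using hL_two l1 l2 finV by (simp add: resolving_set_def)
  qed (auto simp: hL_def)
  from fd_le[OF this finV] show ?thesis using sum_hL by simp
qed

end


lemma two_elems: assumes "card G \<ge> 2" shows "\<exists>a b. a \<in> G \<and> b \<in> G \<and> a \<noteq> b"
proof -
  have fin: "finite G" using assms by (metis card.infinite not_numeral_le_zero)
  have "G \<noteq> {}" using assms by auto
  then obtain a where a: "a \<in> G" by blast
  have "card (G - {a}) \<ge> 1" using assms a fin by simp
  then have "card (G - {a}) > 0" by simp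
  then have "G - {a} \<noteq> {}" by (metis card_gt_0_iff)
  then obtain b where "b \<in> G" "b \<noteq> a" by blast
  then show ?thesis using a by blast
qed

lemma other_elem: assumes "card G \<ge> 2" shows "\<exists>a\<in>G. a \<noteq> x"
  using two_elems[OF assms] by metis

context tree begin

lemma R1_sym: "resolving_set1 V E x y = resolving_set1 V E y x"
  unfolding resolving_set1_def by auto

lemma LR_two_leaves:
  assumes LR: LR and c2: "card V \<ge> 2" and xy: "x \<in> V" "y \<in> V" "x \<noteq> y" and xL: "x \<in> L"
  shows "\<exists>l1 l2. l1 \<in> L \<and> l2 \<in> L \<and> l1 \<noteq> l2 \<and> l1 \<in> resolving_set1 V E x y \<and> l2 \<in> resolving_set1 V E x y"
proof (cases "y \<in> L")
  case True
  have "x \<in> resolving_set1 V E x y" "y \<in> resolving_set1 V E x y" by (simp_all add: R1_char[OF xy])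
  then show ?thesis using xy(3) xL True by (intro exI[of _ x] exI[of _ y]) simp
next
  case False
  have "card {l \<in> L. E y l} \<ge> 2" using LR xy False unfolding LR_def by blast
  from other_elem[OF this, of x] obtain l where "l \<in> {l \<in> L. E y l}" "l \<noteq> x" by (rule bexE)
  then have l: "l \<in> L" "E y l" "l \<noteq> x" by simp_all
  have "\<not> E x l"
  proof
    assume "E x l"
    then have "l = nb x" using nb(2)[OF xL] by blast
    then have "V = {x, l}" using leaf_leaf[OF xL] l by simp
    then show False using xy l False by auto
  qed
  then have "l \<in> resolving_set1 V E x y" using R1_char[OF xy] l L_V by auto
  moreover have "x \<in> resolving_set1 V E x y" using R1_char[OF xy] by auto
  ultimately show ?thesis using l xL by (intro exI[of _ l] exI[of _ x]) simp
qed

lemma LR_trunc: assumes LR: LR and c2: "card V \<ge> 2"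
  shows "trunc_resolving_function V E hL"
  unfolding trunc_resolving_function_def
proof (intro conjI ballI impI)
  fix x y assume xy: "x \<in> V" "y \<in> V" "x \<noteq> y"
  have "\<exists>l1 l2. l1 \<in> L \<and> l2 \<in> L \<and> l1 \<noteq> l2 \<and> l1 \<in> resolving_set1 V E x y \<and> l2 \<in> resolving_set1 V E x y"
  proof (cases "x \<in> L")
    case True then show ?thesis using LR_two_leaves[OF LR c2 xy] by blast
  next
    case xN: False
    show ?thesis
    proof (cases "y \<in> L")
      case True
      have e: "resolving_set1 V E y x = resolving_set1 V E x y" by (rule R1_sym)
      show ?thesis using LR_two_leaves[OF LR c2 xy(2,1) _ True] xy(3) unfolding e by blast
    next
      case False
      have "card {l \<in> L. E x l} \<ge> 2" using LR xy xN unfolding LR_def by blast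
      from two_elems[OF this] obtain l1 l2 where "l1 \<in> {l \<in> L. E x l}" "l2 \<in> {l \<in> L. E x l}" "l1 \<noteq> l2"
        by (elim exE conjE)
      then have l: "l1 \<in> L" "E x l1" "l2 \<in> L" "E x l2" "l1 \<noteq> l2" by simp_all
      have "\<not> E y l1"
      proof
        assume "E y l1"
        then have "E l1 y" by (rule Esym)
        then have "y = nb l1" using nb(2)[OF l(1)] by simp
        moreover have "E l1 x" using Esym[OF l(2)] .
        then have "x = nb l1" using nb(2)[OF l(1)] by simp
        ultimately show False using xy by simp
      qed
      moreover have "\<not> E y l2"
      proof
        assume "E y l2"
        then have "E l2 y" by (rule Esym)
        then have "y = nb l2" using nb(2)[OF l(3)] by simp
        moreover have "E l2 x" using Esym[OF l(4)] .
        then have "x = nb l2" using nb(2)[OF l(3)] by simp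
        ultimately show False using xy by simp
      qed
      ultimately have "l1 \<in> resolving_set1 V E x y" "l2 \<in> resolving_set1 V E x y"
        using l L_V by (simp_all add: R1_char[OF xy])
      then show ?thesis using l by (intro exI[of _ l1] exI[of _ l2]) simp
    qed
  qed
  then obtain l1 l2 where "l1 \<in> L" "l2 \<in> L" "l1 \<noteq> l2" "l1 \<in> resolving_set1 V E x y" "l2 \<in> resolving_set1 V E x y"
    by blast
  moreover have "finite (resolving_set1 V E x y)" using finV by (simp add: resolving_set1_def)
  ultimately show "1 \<le> sum hL (resolving_set1 V E x y)"
    using hL_two by blast
qed (auto simp: hL_def)

lemma LR_fd1: assumes LR "card V \<ge> 2" shows "frac_dim1 V E \<le> card L / 2"
  using fd1_le[OF LR_trunc[OF assms] finV] sum_hL by simp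

lemma twin_R: assumes l: "l \<in> L" "l' \<in> L" "l \<noteq> l'" "nb l = nb l'"
  shows "resolving_set V E l l' \<subseteq> {l, l'}"
proof
  fix z assume z: "z \<in> resolving_set V E l l'"
  show "z \<in> {l, l'}"
  proof (rule ccontr)
    assume "z \<notin> {l, l'}"
    then have "gdist V E l z = gdist V E l' z"
      using twin_dist[OF l(1)] twin_dist[OF l(2)] z l(4) by (simp add: resolving_set_def)
    then show False using z by (simp add: resolving_set_def)
  qed
qed

lemma LR_fd: assumes LR: LR and c2: "card V \<ge> 2" shows "card L / 2 \<le> frac_dim V E"
proof (rule fd_ge)
  show "resolving_function V E hL" by (rule trunc_resolving[OF LR_trunc[OF assms]])
next
  fix g assume g: "resolving_function V E g"
  have gnn: "\<And>v. v \<in> V \<Longrightarrow> 0 \<le> g v" using g by (simp add: resolving_function_def)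
  have pair: "sum g (resolving_set V E x y) \<ge> 1" if "x \<in> V" "y \<in> V" "x \<noteq> y" for x y
    using g that by (simp add: resolving_function_def)
  show "card L / 2 \<le> sum g V"
  proof (cases "card V \<ge> 3")
    case False
    then have cV: "card V = 2" using c2 by simp
    from two_elems[OF c2] obtain x y where xy: "x \<in> V" "y \<in> V" "x \<noteq> y" by (elim exE conjE)
    have "sum g (resolving_set V E x y) \<le> sum g V"
      using gnn finV by (intro sum_mono2) (auto simp: resolving_set_def)
    moreover have "card L \<le> card V" using finV by (intro card_mono) (auto simp: leaves_def)
    ultimately show ?thesis using pair[OF xy] cV by simp
  next
    case c3: True
    have "sum g L \<le> sum g V" using gnn finV by (intro sum_mono2) (auto simp: leaves_def)
    moreover have "card L / 2 \<le> sum g L"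
    proof (rule group_sum[where f = nb])
      show "finite L" by (rule finL)
    next
      fix l assume l: "l \<in> L"
      have "{l' \<in> L. E (nb l) l'} \<subseteq> {l' \<in> L. nb l' = nb l}"
      proof
        fix l' assume "l' \<in> {l' \<in> L. E (nb l) l'}"
        then have "l' \<in> L" "E (nb l) l'" by auto
        then have "E l' (nb l)" using Esym by metis
        then show "l' \<in> {l' \<in> L. nb l' = nb l}" using nb(2) \<open>l' \<in> L\<close> by simp
      qed
      moreover have "card {l' \<in> L. E (nb l) l'} \<ge> 2"
        using LR nb_V[OF l] nb_internal[OF c3 l] unfolding LR_def by blast
      moreover have "card {l' \<in> L. E (nb l) l'} \<le> card {l' \<in> L. nb l' = nb l}"
        using calculation(1) finL by (intro card_mono) auto
      ultimately show "2 \<le> card {l' \<in> L. nb l' = nb l}" by linarith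
    next
      fix l l' assume ll: "l \<in> L" "l' \<in> L" "l \<noteq> l'" "nb l = nb l'"
      have "sum g (resolving_set V E l l') \<le> sum g {l, l'}"
        using twin_R[OF ll] gnn L_V ll by (intro sum_mono2) auto
      moreover have "sum g (resolving_set V E l l') \<ge> 1" by (rule pair[OF L_V[OF ll(1)] L_V[OF ll(2)] ll(3)])
      ultimately show "1 \<le> g l + g l'" using ll by simp
    qed
    ultimately show ?thesis by simp
  qed
qed

end


lemma sum_ins_le: "finite A \<Longrightarrow> 0 \<le> (h::'b \<Rightarrow> real) a \<Longrightarrow> sum h (insert a A) \<le> h a + sum h A"
  by (cases "a \<in> A") (auto simp: sum.insert_remove insert_absorb intro: sum_nonneg)

context tree begin

lemma Esym_iff: "E x y \<longleftrightarrow> E y x" using Esym by metis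

lemma leaves_exist: assumes "card V \<ge> 2" shows "L \<noteq> {}"
proof -
  from two_elems[OF assms] obtain x y where "x \<in> V" "y \<in> V" "x \<noteq> y" by (elim exE conjE)
  from leaf_resolves[OF this assms] show ?thesis by auto
qed

lemma forest_leaf:
  assumes U: "U \<subseteq> V" "U \<noteq> {}" and deg: "\<And>u. u \<in> U \<Longrightarrow> card {u' \<in> U. E u u'} \<ge> 2"
  shows False
proof -
  have ex: "\<exists>xs. length xs = Suc n \<and> set xs \<subseteq> U \<and> walk E xs \<and> nbk xs" for n
  proof (induction n)
    case 0
    obtain u where "u \<in> U" using U by blast
    then show ?case by (intro exI[of _ "[u]"]) (simp add: nbk_def)
  next
    case (Suc n)
    then obtain xs where xs: "length xs = Suc n" "set xs \<subseteq> U" "walk E xs" "nbk xs" by blast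
    have ne: "xs \<noteq> []" using xs by auto
    have yU: "last xs \<in> U" using xs ne last_in_set by blast
    let ?prev = "if length xs \<ge> 2 then xs ! (length xs - 2) else last xs"
    from other_elem[OF deg[OF yU], of ?prev] obtain u where
      u: "u \<in> {u' \<in> U. E (last xs) u'}" "u \<noteq> ?prev" by (rule bexE)
    have "nbk (xs @ [u])"
    proof (rule nbk_append)
      show "nbk xs" by (rule xs(4))
      show "nbk [u]" by (simp add: nbk_def)
      show "2 \<le> length xs \<Longrightarrow> [u] \<noteq> [] \<Longrightarrow> xs ! (length xs - 2) \<noteq> hd [u]" using u(2) by auto
      show "xs \<noteq> [] \<Longrightarrow> 2 \<le> length [u] \<Longrightarrow> last xs \<noteq> [u] ! 1" by simp
    qed
    moreover have "walk E (xs @ [u])" using xs(3) u(1) ne by (simp add: walk_append)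
    moreover have "set (xs @ [u]) \<subseteq> U" using xs(2) u(1) by simp
    moreover have "length (xs @ [u]) = Suc (Suc n)" using xs(1) by simp
    ultimately show ?case by blast
  qed
  from ex[of "card V"] obtain xs where xs: "length xs = Suc (card V)" "set xs \<subseteq> U" "walk E xs" "nbk xs"
    by blast
  have sV: "set xs \<subseteq> V" using xs(2) U(1) by (rule subset_trans)
  have "distinct xs" using nb_distinct[OF xs(3) sV xs(4)] .
  then have "card (set xs) = Suc (card V)" using xs(1) by (simp add: distinct_card)
  moreover have "card (set xs) \<le> card V" using sV finV by (rule card_mono[rotated])
  ultimately show False by simp
qed

end

locale hctx = tree +
  fixes h :: "'a \<Rightarrow> real"
  assumes htr: "trunc_resolving_function V E h"
    and c3: "card V \<ge> 3"
begin

lemma hnn: "v \<in> V \<Longrightarrow> 0 \<le> h v" using htr by (simp add: trunc_resolving_function_def)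

lemma hpair: "x \<in> V \<Longrightarrow> y \<in> V \<Longrightarrow> x \<noteq> y \<Longrightarrow> 1 \<le> sum h (resolving_set1 V E x y)"
  using htr by (simp add: trunc_resolving_function_def)

lemma hbound: assumes "x \<in> V" "y \<in> V" "x \<noteq> y" "resolving_set1 V E x y \<subseteq> X" "X \<subseteq> V"
  shows "1 \<le> sum h X"
proof -
  have fX: "finite X" using finite_subset[OF assms(5) finV] .
  have "sum h (resolving_set1 V E x y) \<le> sum h X"
  proof (rule sum_mono2[OF fX assms(4)])
    fix b assume "b \<in> X - resolving_set1 V E x y"
    then show "0 \<le> h b" using assms(5) hnn by blast
  qed
  then show ?thesis using hpair[OF assms(1-3)] by linarith
qed

definition kk :: "'a \<Rightarrow> nat" where "kk w = card {l \<in> L. E w l}"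
definition S :: "'a set" where "S = {l \<in> L. kk (nb l) = 1}"
definition Bg :: "'a set" where "Bg = L - S"
definition I :: "'a set" where "I = V - L"
definition W1 :: "'a set" where "W1 = nb ` S"
definition F :: "'a set" where "F = I - W1"
definition a :: "'a \<Rightarrow> real" where "a l = h l + h (nb l)"
definition phi :: real where "phi = sum h F"
definition NW :: "'a \<Rightarrow> 'a set" where "NW w = {u \<in> W1. E w u}"

lemma finI: "finite I" using finV by (simp add: I_def)
lemma finF: "finite F" using finI by (simp add: F_def)
lemma finS: "finite S" using finL by (simp add: S_def)
lemma finB: "finite Bg" using finL by (simp add: Bg_def)

lemma S_L: "l \<in> S \<Longrightarrow> l \<in> L" by (simp add: S_def)
lemma nb_I: "l \<in> L \<Longrightarrow> nb l \<in> I" using nb_V nb_internal[OF c3] by (simp add: I_def)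
lemma W1_I: "W1 \<subseteq> I" using nb_I S_L by (auto simp: W1_def)
lemma F_I: "F \<subseteq> I" by (auto simp: F_def)
lemma I_V: "I \<subseteq> V" by (auto simp: I_def)
lemma L_notI: "l \<in> L \<Longrightarrow> l \<notin> I" by (simp add: I_def)
lemma phi_nn: "0 \<le> phi" unfolding phi_def using hnn F_I I_V by (intro sum_nonneg) auto

lemma E_nb: assumes "l \<in> L" shows "E (nb l) l"
  using nb(1)[OF assms] by (rule Esym)

lemma leaf_nbr: assumes "l' \<in> L" "E w l'" shows "w = nb l'"
  using nb(2)[OF assms(1)] Esym[OF assms(2)] by simp

lemma S_uniq: assumes "l \<in> S" "l' \<in> L" "E (nb l) l'" shows "l' = l"
proof -
  have l: "l \<in> L" "kk (nb l) = 1" using assms(1) by (simp_all add: S_def)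
  then obtain z where z: "{x \<in> L. E (nb l) x} = {z}" by (auto simp: kk_def card_1_singleton_iff)
  have "l \<in> {x \<in> L. E (nb l) x}" using l E_nb by simp
  moreover have "l' \<in> {x \<in> L. E (nb l) x}" using assms by simp
  ultimately have "l \<in> {z}" "l' \<in> {z}" by (simp_all only: z)
  then show ?thesis by simp
qed

lemma inj_nb: "inj_on nb S"
proof (rule inj_onI)
  fix l l' assume ll: "l \<in> S" "l' \<in> S" "nb l = nb l'"
  have "l' \<in> L" using ll(2) S_L by blast
  moreover have "E (nb l) l'" unfolding ll(3) using E_nb[OF \<open>l' \<in> L\<close>] .
  ultimately show "l = l'" using S_uniq[OF ll(1)] by metis
qed

lemma dec: "sum h V = sum h Bg + sum a S + phi"
proof -
  have LV: "L \<subseteq> V" by (auto simp: leaves_def)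
  have SL: "S \<subseteq> L" by (auto simp: S_def)
  have "sum h V = sum h (V - L) + sum h L" by (rule sum.subset_diff[OF LV finV])
  moreover have "sum h L = sum h (L - S) + sum h S" by (rule sum.subset_diff[OF SL finL])
  moreover have "sum h I = sum h (I - W1) + sum h W1" by (rule sum.subset_diff[OF W1_I finI])
  moreover have "sum h W1 = sum (h \<circ> nb) S" unfolding W1_def using inj_nb by (rule sum.reindex)
  moreover have "sum a S = sum h S + sum (h \<circ> nb) S" unfolding a_def by (simp add: sum.distrib)
  ultimately show ?thesis by (simp add: I_def Bg_def F_def phi_def)
qed

lemma cardL: "card L = card Bg + card S"
proof -
  have SL: "S \<subseteq> L" by (auto simp: S_def)
  have "card (L - S) = card L - card S" using finS SL by (rule card_Diff_subset)
  moreover have "card S \<le> card L" using finL SL by (rule card_mono)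
  ultimately show ?thesis by (simp add: Bg_def)
qed

lemma Bbound: "card Bg / 2 \<le> sum h Bg"
proof (rule group_sum[where f = nb])
  show "finite Bg" by (rule finB)
next
  fix l assume l: "l \<in> Bg"
  have lL: "l \<in> L" and k: "kk (nb l) \<noteq> 1" using l by (auto simp: Bg_def S_def)
  let ?G = "{l' \<in> L. E (nb l) l'}"
  have sub: "?G \<subseteq> {l' \<in> Bg. nb l' = nb l}"
  proof
    fix l' assume "l' \<in> ?G"
    then have l': "l' \<in> L" "E (nb l) l'" by auto
    have "nb l = nb l'" using leaf_nbr[OF l'(1) l'(2)] .
    then show "l' \<in> {l' \<in> Bg. nb l' = nb l}" using l' k by (auto simp: Bg_def S_def)
  qed
  have "l \<in> ?G" using lL E_nb by simp
  then have "card ?G \<noteq> 0" using finL by auto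
  then have "card ?G \<ge> 2" using k by (simp add: kk_def)
  moreover have "card ?G \<le> card {l' \<in> Bg. nb l' = nb l}" using sub finB by (intro card_mono) auto
  ultimately show "2 \<le> card {l' \<in> Bg. nb l' = nb l}" by linarith
next
  fix l l' assume ll: "l \<in> Bg" "l' \<in> Bg" "l \<noteq> l'" "nb l = nb l'"
  have lL: "l \<in> L" "l' \<in> L" using ll by (auto simp: Bg_def)
  have lV: "l \<in> V" "l' \<in> V" using lL L_V by auto
  have "resolving_set1 V E l l' \<subseteq> {l, l'}"
  proof
    fix z assume z: "z \<in> resolving_set1 V E l l'"
    show "z \<in> {l, l'}"
    proof (rule ccontr)
      assume zn: "z \<notin> {l, l'}"
      then have "E l z \<noteq> E l' z" using z R1_char[OF lV ll(3)] by auto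
      moreover have "E l z \<longleftrightarrow> z = nb l" using nb[OF lL(1)] by metis
      moreover have "E l' z \<longleftrightarrow> z = nb l'" using nb[OF lL(2)] by metis
      ultimately show False using ll(4) by simp
    qed
  qed
  from hbound[OF lV ll(3) this] have "1 \<le> sum h {l, l'}" using lV by simp
  then show "1 \<le> h l + h l'" using ll(3) by simp
qed

lemma Spair: assumes l: "l \<in> S" "l' \<in> S" "l \<noteq> l'" shows "1 \<le> a l + a l'"
proof -
  have lL: "l \<in> L" "l' \<in> L" using l S_L by auto
  have lV: "l \<in> V" "l' \<in> V" using lL L_V by auto
  have nn: "nb l \<noteq> nb l'" using inj_nb l by (metis inj_on_def)
  have "resolving_set1 V E l l' \<subseteq> {l, l', nb l, nb l'}"
  proof
    fix z assume z: "z \<in> resolving_set1 V E l l'"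
    show "z \<in> {l, l', nb l, nb l'}"
    proof (rule ccontr)
      assume zn: "z \<notin> {l, l', nb l, nb l'}"
      then have "E l z \<noteq> E l' z" using z R1_char[OF lV l(3)] by auto
      moreover have "E l z \<longleftrightarrow> z = nb l" using nb[OF lL(1)] by metis
      moreover have "E l' z \<longleftrightarrow> z = nb l'" using nb[OF lL(2)] by metis
      ultimately show False using zn by auto
    qed
  qed
  moreover have "{l, l', nb l, nb l'} \<subseteq> V" using lV nb_V lL by auto
  ultimately have "1 \<le> sum h {l, l', nb l, nb l'}" by (rule hbound[OF lV l(3)])
  moreover have "nb l \<noteq> l" "nb l \<noteq> l'" "nb l' \<noteq> l" "nb l' \<noteq> l'"
    using nb_I lL L_notI by metis+
  ultimately show ?thesis using l(3) nn by (simp add: a_def)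
qed

lemma R1_single:
  assumes l: "l \<in> S"
  shows "resolving_set1 V E l (nb l) \<subseteq> insert l (insert (nb l) (NW (nb l) \<union> F))"
proof
  have lL: "l \<in> L" using l S_L by auto
  have lV: "l \<in> V" "nb l \<in> V" using lL L_V nb_V by auto
  have ne: "l \<noteq> nb l" using nb_ne lL by metis
  fix z assume z: "z \<in> resolving_set1 V E l (nb l)"
  show "z \<in> insert l (insert (nb l) (NW (nb l) \<union> F))"
  proof (rule ccontr)
    assume zn: "\<not> ?thesis"
    then have zV: "z \<in> V" and d: "E l z \<noteq> E (nb l) z" using z R1_char[OF lV ne] by auto
    have "E l z \<longleftrightarrow> z = nb l" using nb[OF lL] by metis
    then have Ez: "E (nb l) z" using d zn by auto
    have "z \<notin> L"
    proof
      assume "z \<in> L"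
      then have "z = l" using S_uniq[OF l _ Ez] by simp
      then show False using zn by simp
    qed
    then have "z \<in> I" using zV by (simp add: I_def)
    then show False using zn Ez by (auto simp: NW_def F_def)
  qed
qed

lemma c1_none: assumes l: "l \<in> S" and nw: "NW (nb l) = {}" shows "1 \<le> a l + phi"
proof -
  have lL: "l \<in> L" using l S_L by auto
  have lV: "l \<in> V" "nb l \<in> V" using lL L_V nb_V by auto
  have ne: "l \<noteq> nb l" using nb_ne lL by metis
  have "resolving_set1 V E l (nb l) \<subseteq> insert l (insert (nb l) F)" using R1_single[OF l] nw by simp
  moreover have "insert l (insert (nb l) F) \<subseteq> V" using lV F_I I_V by auto
  ultimately have "1 \<le> sum h (insert l (insert (nb l) F))" by (rule hbound[OF lV ne])
  moreover have "l \<notin> F" using F_I L_notI lL by auto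
  moreover have "nb l \<notin> F" using l by (auto simp: F_def W1_def)
  ultimately show ?thesis using finF ne by (simp add: a_def phi_def)
qed

lemma c1_one: assumes l: "l \<in> S" and nw: "NW (nb l) = {p}" shows "1 \<le> a l + h p + phi"
proof -
  have lL: "l \<in> L" using l S_L by auto
  have lV: "l \<in> V" "nb l \<in> V" using lL L_V nb_V by auto
  have ne: "l \<noteq> nb l" using nb_ne lL by metis
  have p: "p \<in> W1" "E (nb l) p" using nw by (auto simp: NW_def)
  have pI: "p \<in> I" using p W1_I by auto
  have "resolving_set1 V E l (nb l) \<subseteq> insert l (insert (nb l) (insert p F))" using R1_single[OF l] nw by simp
  moreover have "insert l (insert (nb l) (insert p F)) \<subseteq> V" using lV F_I I_V pI by auto
  ultimately have "1 \<le> sum h (insert l (insert (nb l) (insert p F)))" by (rule hbound[OF lV ne])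
  moreover have "l \<notin> F" using F_I L_notI lL by auto
  moreover have "nb l \<notin> F" using l by (auto simp: F_def W1_def)
  moreover have "p \<notin> F" using p by (auto simp: F_def)
  moreover have "p \<noteq> nb l" using p(2) by auto
  moreover have "p \<noteq> l" using pI L_notI lL by auto
  ultimately show ?thesis using finF ne by (simp add: a_def phi_def)
qed

lemma c2_one: assumes l: "l \<in> S" and lp: "lp \<in> S" and nw: "NW (nb l) = {nb lp}"
  shows "1 \<le> h lp + a l + phi"
proof -
  have lL: "l \<in> L" "lp \<in> L" using l lp S_L by auto
  have lV: "l \<in> V" "nb l \<in> V" "lp \<in> V" using lL L_V nb_V by auto
  have Ew: "E (nb l) (nb lp)" using nw by (auto simp: NW_def)
  have ne: "lp \<noteq> nb l" using nb_I lL L_notI by metis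
  have R: "resolving_set1 V E lp (nb l) \<subseteq> insert lp (insert (nb l) (insert l F))"
  proof
    fix z assume z: "z \<in> resolving_set1 V E lp (nb l)"
    show "z \<in> insert lp (insert (nb l) (insert l F))"
    proof (rule ccontr)
      assume zn: "\<not> ?thesis"
      then have zV: "z \<in> V" and d: "E lp z \<noteq> E (nb l) z" using z R1_char[OF lV(3,2) ne] by auto
      have "E lp z \<longleftrightarrow> z = nb lp" using nb[OF lL(2)] by metis
      then have Ez: "E (nb l) z" "z \<noteq> nb lp" using d Ew by auto
      have "z \<notin> L"
      proof
        assume "z \<in> L"
        then have "z = l" using S_uniq[OF l _ Ez(1)] by simp
        then show False using zn by simp
      qed
      then have "z \<in> I" using zV by (simp add: I_def)
      moreover have "z \<notin> W1"
      proof
        assume "z \<in> W1"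
        then have "z \<in> NW (nb l)" using Ez by (simp add: NW_def)
        then show False using nw Ez by simp
      qed
      ultimately show False using zn by (simp add: F_def)
    qed
  qed
  moreover have "insert lp (insert (nb l) (insert l F)) \<subseteq> V" using lV F_I I_V by auto
  ultimately have "1 \<le> sum h (insert lp (insert (nb l) (insert l F)))" by (rule hbound[OF lV(3,2) ne])
  moreover have "l \<notin> F" "lp \<notin> F" using F_I L_notI lL by auto
  moreover have "nb l \<notin> F" using l by (auto simp: F_def W1_def)
  moreover have "lp \<noteq> l"
  proof
    assume "lp = l" then show False using Ew by simp
  qed
  moreover have "nb l \<noteq> l" using nb_ne lL by metis
  ultimately show ?thesis using finF ne by (simp add: a_def phi_def)
qed

lemma zero_leaf: assumes v: "v \<in> I" "kk v = 0" and l: "l \<in> L" shows "1 \<le> h l + sum h I"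
proof -
  have lV: "l \<in> V" "v \<in> V" using l L_V v I_V by auto
  have ne: "l \<noteq> v" using v l L_notI by auto
  have fin0: "finite {x \<in> L. E v x}" using finL by simp
  have nl: "\<And>x. x \<in> L \<Longrightarrow> \<not> E v x" using v fin0 by (auto simp: kk_def)
  have "resolving_set1 V E l v \<subseteq> insert l I"
  proof
    fix z assume z: "z \<in> resolving_set1 V E l v"
    show "z \<in> insert l I"
    proof (rule ccontr)
      assume zn: "\<not> ?thesis"
      then have zV: "z \<in> V" and d: "E l z \<noteq> E v z" "z \<noteq> v" using z R1_char[OF lV ne] v by auto
      have "z \<in> L" using zn zV by (simp add: I_def)
      moreover have "E l z \<longleftrightarrow> z = nb l" using nb[OF l] by metis
      ultimately show False using d nl nb_I[OF l] L_notI by auto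
    qed
  qed
  moreover have "insert l I \<subseteq> V" using lV I_V by auto
  ultimately have "1 \<le> sum h (insert l I)" by (rule hbound[OF lV ne])
  then show ?thesis using finI L_notI[OF l] by simp
qed

end


lemma clique_special:
  fixes c :: "'b \<Rightarrow> real"
  assumes fin: "finite G" and c3: "card G \<ge> 3" and x: "x \<in> G"
    and pw: "\<And>x y. x \<in> G \<Longrightarrow> y \<in> G \<Longrightarrow> x \<noteq> y \<Longrightarrow> c x + c y \<ge> 1"
  shows "sum c G \<ge> card G / 2 + (1/2 - c x)"
proof (cases "c x \<ge> 1/2")
  case True
  have "sum c G \<ge> card G / 2" using clique_sum[OF fin _ pw] c3 by simp
  then show ?thesis using True by simp
next
  case False
  have "sum c G = c x + sum c (G - {x})" using fin x by (rule sum.remove)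
  moreover have "sum c (G - {x}) \<ge> sum (\<lambda>_. 1 - c x) (G - {x})"
    using pw x by (intro sum_mono) (auto simp: algebra_simps)
  moreover have "sum (\<lambda>_. 1 - c x) (G - {x}) = (real (card G) - 1) * (1 - c x)"
    using fin x c3 by (simp add: of_nat_diff)
  moreover have "(real (card G) - 3) * (1/2 - c x) \<ge> 0"
    using False c3 by (intro mult_nonneg_nonneg) auto
  ultimately show ?thesis by (simp add: algebra_simps)
qed

context hctx begin

lemma NW_fin: "finite (NW w)" using finS by (simp add: NW_def W1_def)

lemma gap_main:
  assumes nLR: "\<not> LR"
  shows "card L / 2 + 1/6 \<le> sum h V"
proof -
  have tot: "sum h V = sum h Bg + sum a S + phi" by (rule dec)
  have cL: "real (card L) = real (card Bg) + real (card S)" using cardL by simp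
  have B: "card Bg / 2 \<le> sum h Bg" by (rule Bbound)
  have pf: "phi \<ge> 0" by (rule phi_nn)
  have Sp: "\<And>x y. x \<in> S \<Longrightarrow> y \<in> S \<Longrightarrow> x \<noteq> y \<Longrightarrow> 1 \<le> a x + a y" using Spair by blast
  show ?thesis
  proof (cases "S = {}")
    case S0: True
    obtain w where w: "w \<in> V" "w \<notin> L" "kk w < 2" using nLR unfolding LR_def kk_def by auto
    have "kk w \<noteq> 1"
    proof
      assume "kk w = 1"
      then obtain l where l: "{l' \<in> L. E w l'} = {l}" by (auto simp: kk_def card_1_singleton_iff)
      then have lL: "l \<in> L" "E w l" by auto
      then have "w = nb l" using leaf_nbr by blast
      then have "l \<in> S" using \<open>kk w = 1\<close> lL by (simp add: S_def)
      then show False using S0 by simp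
    qed
    then have k0: "kk w = 0" using w by simp
    have wI: "w \<in> I" using w by (simp add: I_def)
    have W0: "W1 = {}" using S0 by (simp add: W1_def)
    then have FI: "F = I" by (simp add: F_def)
    have BL: "Bg = L" using S0 by (simp add: Bg_def)
    have SV: "sum h V = sum h L + phi" using tot S0 BL by simp
    have hl: "1 - phi \<le> h l" if lL: "l \<in> L" for l
    proof -
      have "1 \<le> h l + sum h I" by (rule zero_leaf[OF wI k0 lL])
      then show ?thesis using FI by (simp add: phi_def)
    qed
    have Lne: "L \<noteq> {}" using leaves_exist c3 by simp
    then have cL1: "real (card L) \<ge> 1" using finL by (simp add: Suc_leI card_gt_0_iff)
    show ?thesis
    proof (cases "phi \<ge> 1/2")
      case True
      have "card L / 2 \<le> sum h L" using B BL by simp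
      then show ?thesis using SV True by simp
    next
      case False
      have "sum (\<lambda>_. 1 - phi) L \<le> sum h L" using hl by (intro sum_mono) simp
      then have "real (card L) * (1 - phi) \<le> sum h L" by simp
      moreover have "real (card L) * (1/2 - phi) \<ge> 1 * (1/2 - phi)"
        using cL1 False by (intro mult_right_mono) auto
      ultimately show ?thesis using SV by (simp add: algebra_simps)
    qed
  next
    case Sne: False
    have key: "real (card S) / 2 + 1/6 \<le> sum a S + phi"
    proof -
      have W1V: "W1 \<subseteq> V" using W1_I I_V by simp
      have W1ne: "W1 \<noteq> {}" using Sne by (simp add: W1_def)
      have "\<exists>u\<in>W1. \<not> card {u' \<in> W1. E u u'} \<ge> 2"
      proof (rule ccontr)
        assume "\<not> ?thesis"
        then have "\<And>u. u \<in> W1 \<Longrightarrow> card {u' \<in> W1. E u u'} \<ge> 2" by blast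
        from forest_leaf[OF W1V W1ne this] show False .
      qed
      then obtain u where u: "u \<in> W1" "card {u' \<in> W1. E u u'} < 2" by auto
      then obtain l where lS: "l \<in> S" and ul: "u = nb l" by (auto simp: W1_def)
      have cNW: "card (NW (nb l)) \<le> 1" using u ul by (simp add: NW_def)
      show ?thesis
      proof (cases "NW (nb l) = {}")
        case nw0: True
        have c1: "1 \<le> a l + phi" by (rule c1_none[OF lS nw0])
        show ?thesis
        proof (cases "card S \<ge> 3")
          case True
          have fr: "finite (S - {l})" using finS by simp
          have "card (S - {l}) \<ge> 2" using True lS finS by simp
          then have "real (card (S - {l})) / 2 \<le> sum a (S - {l})"
            using clique_sum[OF fr] Sp by simp
          moreover have "sum a S = a l + sum a (S - {l})" using finS lS by (rule sum.remove)
          moreover have "real (card (S - {l})) = real (card S) - 1" using True lS finS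
            by (simp add: of_nat_diff)
          ultimately show ?thesis using c1 pf by simp
        next
          case False
          moreover have "card S \<noteq> 0" using Sne finS by simp
          ultimately consider "card S = 1" | "card S = 2" by linarith
          then show ?thesis
          proof cases
            case 1
            then obtain z where "S = {z}" by (auto simp: card_1_singleton_iff)
            then have "S = {l}" using lS by simp
            then show ?thesis using c1 pf by simp
          next
            case 2
            have "card (S - {l}) = 1" using 2 lS finS by (simp add: card_Diff_singleton)
            then obtain l' where l': "S - {l} = {l'}" by (auto simp: card_1_singleton_iff)
            then have l'S: "l' \<in> S" "l' \<noteq> l" by auto
            have SS: "S = {l, l'}" using l' lS by blast
            have W: "W1 = {nb l, nb l'}" using SS by (simp add: W1_def)
            have "NW (nb l') = {}"
            proof (rule ccontr)
              assume "NW (nb l') \<noteq> {}"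
              then obtain v where v: "v \<in> W1" "E (nb l') v" by (auto simp: NW_def)
              then have "v = nb l" using W by auto
              then have "E (nb l) (nb l')" using v Esym by metis
              moreover have "nb l' \<in> W1" using W by simp
              ultimately have "nb l' \<in> NW (nb l)" by (simp add: NW_def)
              then show False using nw0 by simp
            qed
            from c1_none[OF l'S(1) this] have c1': "1 \<le> a l' + phi" .
            have "sum a S = a l + a l'" using SS l'S by simp
            then show ?thesis using c1 c1' 2 Sp[OF lS l'S(1)] l'S pf by simp
          qed
        qed
      next
        case nw1: False
        then have "card (NW (nb l)) = 1" using cNW NW_fin by (simp add: le_Suc_eq card_0_eq)
        then obtain p where nwp: "NW (nb l) = {p}" by (auto simp: card_1_singleton_iff)
        then have "p \<in> W1" "E (nb l) p" by (auto simp: NW_def)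
        then obtain lp where lpS: "lp \<in> S" and p: "p = nb lp" by (auto simp: W1_def)
        have lpl: "lp \<noteq> l"
        proof
          assume "lp = l" then show False using \<open>E (nb l) p\<close> p by simp
        qed
        have c1: "1 \<le> a l + h p + phi" by (rule c1_one[OF lS nwp])
        have c2: "1 \<le> h lp + a l + phi" using c2_one[OF lS lpS] nwp p by simp
        have alp: "a lp = h lp + h p" using p by (simp add: a_def)
        have K: "2 \<le> 2 * a l + a lp + 2 * phi" using c1 c2 alp by simp
        have fin2: "finite (S - {l, lp})" using finS by simp
        have sumS: "sum a S = a l + a lp + sum a (S - {l, lp})"
        proof -
          have "sum a S = a l + sum a (S - {l})" using finS lS by (rule sum.remove)
          moreover have "sum a (S - {l}) = a lp + sum a (S - {l} - {lp})"
            using finS lpS lpl by (intro sum.remove) auto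
          moreover have "S - {l} - {lp} = S - {l, lp}" by auto
          ultimately show ?thesis by simp
        qed
        have cR: "card (S - {l, lp}) = card S - 2"
        proof -
          have "{l, lp} \<subseteq> S" using lS lpS by simp
          then have "card (S - {l, lp}) = card S - card {l, lp}" using finS
            by (intro card_Diff_subset) auto
          then show ?thesis using lpl by simp
        qed
        have c2S: "card S \<ge> 2"
        proof -
          have "{l, lp} \<subseteq> S" using lS lpS by simp
          then have "card {l, lp} \<le> card S" using finS by (rule card_mono[rotated])
          then show ?thesis using lpl by simp
        qed
        consider "card S = 2" | "card S = 3" | "card S \<ge> 4" using c2S by linarith
        then show ?thesis
        proof cases
          case 1
          then have "S - {l, lp} = {}" using cR fin2 by simp
          then have SS: "S = {l, lp}" using lS lpS by blast
          have W: "W1 = {nb l, nb lp}" using SS by (simp add: W1_def)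
          have "NW (nb lp) = {nb l}"
          proof
            show "NW (nb lp) \<subseteq> {nb l}"
            proof
              fix v assume "v \<in> NW (nb lp)"
              then have v: "v \<in> W1" "E (nb lp) v" by (auto simp: NW_def)
              then show "v \<in> {nb l}" using W by auto
            qed
            have "E (nb lp) (nb l)" using \<open>E (nb l) p\<close> p Esym by metis
            then show "{nb l} \<subseteq> NW (nb lp)" using W by (simp add: NW_def)
          qed
          then have c1': "1 \<le> a lp + h (nb l) + phi" and c2': "1 \<le> h l + a lp + phi"
            using c1_one[OF lpS] c2_one[OF lpS lS] by simp_all
          have K': "2 \<le> 2 * a lp + a l + 2 * phi" using c1' c2' by (simp add: a_def)
          have "sum a S = a l + a lp" using sumS \<open>S - {l, lp} = {}\<close> by simp
          then show ?thesis using K K' 1 Sp[OF lS lpS] lpl pf by simp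
        next
          case 2
          then have "card (S - {l, lp}) = 1" using cR by simp
          then obtain q where q: "S - {l, lp} = {q}" by (auto simp: card_1_singleton_iff)
          then have qS: "q \<in> S" "q \<noteq> l" "q \<noteq> lp" by auto
          have "sum a S = a l + a lp + a q" using sumS q by simp
          moreover have "1 \<le> a q + a l" "1 \<le> a q + a lp" using Sp qS lS lpS by auto
          ultimately show ?thesis using K 2 pf by simp
        next
          case 3
          then have "card (S - {l, lp}) \<ge> 2" using cR by simp
          then have "real (card (S - {l, lp})) / 2 \<le> sum a (S - {l, lp})"
            using clique_sum[OF fin2] Sp by simp
          moreover have "real (card (S - {l, lp})) = real (card S) - 2" using cR 3 by simp
          moreover have "sum a S \<ge> card S / 2 + (1/2 - a lp)"
            using clique_special[OF finS _ lpS] 3 Sp by simp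
          ultimately show ?thesis using K sumS pf by simp
        qed
      qed
    qed
    show ?thesis using tot cL B key by (simp add: field_simps)
  qed
qed

end


context tree begin

lemma card2_all_leaves: assumes "card V = 2" "v \<in> V" shows "v \<in> L"
proof -
  obtain w where w: "E v w" using has_nbr assms by fastforce
  have "N v \<subseteq> V - {v}" by auto
  moreover have "card (V - {v}) = 1" using assms finV by simp
  ultimately have "card (N v) \<le> 1" using finV by (metis card_mono finite_Diff)
  moreover have "w \<in> N v" using w EV by auto
  then have "card (N v) \<noteq> 0" using finV by auto
  ultimately have "card (N v) = 1" by simp
  then show ?thesis using assms by (simp add: leaves_def degree_def)
qed

lemma card2_LR: "card V = 2 \<Longrightarrow> LR"
  unfolding LR_def using card2_all_leaves by blast

lemma nLR_c3: assumes "\<not> LR" "card V \<ge> 2" shows "card V \<ge> 3"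
  using assms card2_LR by (cases "card V = 2") auto

lemma fd1_gap: assumes nLR: "\<not> LR" and c2: "card V \<ge> 2"
  shows "card L / 2 + 1/6 \<le> frac_dim1 V E"
proof (rule fd1_ge[OF one_trunc[OF c2]])
  fix h assume h: "trunc_resolving_function V E h"
  interpret hc: hctx V E h
    by unfold_locales (use h nLR_c3[OF nLR c2] in auto)
  show "card L / 2 + 1/6 \<le> sum h V" by (rule hc.gap_main[OF nLR])
qed

lemma nbE: "l \<in> L \<Longrightarrow> E (nb l) l" using nb(1) Esym by metis

lemma nbr_of_leaf: assumes "l' \<in> L" "E w l'" shows "w = nb l'"
  using nb(2)[OF assms(1)] Esym[OF assms(2)] by simp

lemma major_V: "major V E u \<Longrightarrow> u \<in> V" by (simp add: major_def)

lemma major_not_leaf: "major V E u \<Longrightarrow> u \<notin> L" by (simp add: major_def leaves_def)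

lemma P2_LR: assumes "is_path_graph V E 2" shows LR
proof -
  obtain f where "bij_betw f {0..<(2::nat)} V" using assms by (auto simp: is_path_graph_def)
  then have "card V = card {0..<(2::nat)}" by (metis bij_betw_same_card)
  then show ?thesis using card2_LR by simp
qed

lemma P3_LR: assumes "is_path_graph V E 3" shows LR
proof -
  obtain f where bij: "bij_betw f {0..<3} V" and rel: "\<forall>i<3. \<forall>j<3. E (f i) (f j) \<longleftrightarrow> (i = Suc j \<or> j = Suc i)"
    using assms by (auto simp: is_path_graph_def)
  have Vf: "V = f ` {0..<3}" using bij by (simp add: bij_betw_def)
  have "{0..<3::nat} = {0, 1, 2}" by auto
  then have V3: "V = {f 0, f 1, f 2}" using Vf by simp
  have inj: "inj_on f {0..<3}" using bij by (simp add: bij_betw_def)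
  have d: "f 0 \<noteq> f 1" "f 0 \<noteq> f 2" "f 1 \<noteq> f 2" using inj by (auto dest: inj_onD)
  have e01: "E (f 0) (f 1)" using rel by auto
  have e12: "E (f 1) (f 2)" using rel by auto
  have n02: "\<not> E (f 0) (f 2)" using rel by auto
  have n20: "\<not> E (f 2) (f 0)" using rel by auto
  have N0: "N (f 0) = {f 1}" using V3 e01 n02 by auto
  have N2: "N (f 2) = {f 1}" using V3 e12 n20 Esym by (auto dest: Esym)
  have l0: "f 0 \<in> L" using N0 V3 by (simp add: leaves_def degree_def)
  have l2: "f 2 \<in> L" using N2 V3 by (simp add: leaves_def degree_def)
  show ?thesis unfolding LR_def
  proof (intro ballI impI)
    fix w assume w: "w \<in> V" "w \<notin> L"
    then have "w = f 1" using V3 l0 l2 by auto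
    then have "{f 0, f 2} \<subseteq> {l \<in> L. E w l}" using l0 l2 e01 e12 Esym by auto
    moreover have "finite {l \<in> L. E w l}" using finL by simp
    ultimately have "card {f 0, f 2} \<le> card {l \<in> L. E w l}" by (rule card_mono[rotated])
    then show "2 \<le> card {l \<in> L. E w l}" using d by simp
  qed
qed

lemma M2_LR: assumes "V = M2 V E \<union> L" shows LR
  unfolding LR_def
proof (intro ballI impI)
  fix w assume w: "w \<in> V" "w \<notin> L"
  then have wM: "w \<in> M2 V E" using assms by blast
  then have maj: "major V E w" and ter: "ter V E w \<ge> 2"
    by (auto simp: M2_def exterior_major_def)
  have sub: "terminal_vertices V E w \<subseteq> {l \<in> L. E w l}"
  proof
    fix l assume l: "l \<in> terminal_vertices V E w"
    then have lL: "l \<in> L" and cl: "\<And>u. major V E u \<Longrightarrow> u \<noteq> w \<Longrightarrow> gdist V E l w < gdist V E l u"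
      by (auto simp: terminal_vertices_def)
    let ?u = "nb l"
    have "?u \<notin> L"
    proof
      assume "?u \<in> L"
      then have "V = {l, ?u}" using leaf_leaf[OF lL] by simp
      then show False using w lL \<open>?u \<in> L\<close> by auto
    qed
    then have "?u \<in> M2 V E" using assms nb_V[OF lL] by blast
    then have mu: "major V E ?u" by (auto simp: M2_def exterior_major_def)
    have "?u = w"
    proof (rule ccontr)
      assume "?u \<noteq> w"
      then have "gdist V E l w < gdist V E l ?u" using cl mu by blast
      moreover have "gdist V E l ?u = 1" using gdist_E nb(1)[OF lL] by blast
      ultimately have "gdist V E l w = 0" by simp
      then have "l = w" using gdist_0 L_V[OF lL] w(1) by blast
      then show False using lL w by simp
    qed
    then show "l \<in> {l \<in> L. E w l}" using lL nbE[OF lL] by simp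
  qed
  have "card (terminal_vertices V E w) \<le> card {l \<in> L. E w l}"
    using sub finL by (intro card_mono) auto
  then show "2 \<le> card {l \<in> L. E w l}" using ter by (simp add: ter_def)
qed

lemma LR_cond:
  assumes LR: LR and c2: "card V \<ge> 2"
  shows "is_path_graph V E 2 \<or> is_path_graph V E 3 \<or> (ex_num V E \<ge> 1 \<and> V = M2 V E \<union> L)"
proof (cases "card V = 2")
  case True
  then obtain x y where xy: "x \<noteq> y" "V = {x, y}" by (auto simp: card_2_iff)
  obtain w where "E x w" using has_nbr c2 xy by blast
  then have "w \<in> V" "w \<noteq> x" using EV by auto
  then have Exy: "E x y" using \<open>E x w\<close> xy by auto
  let ?f = "\<lambda>i::nat. if i = 0 then x else y"
  have "bij_betw ?f {0..<2} V"
  proof (rule bij_betw_imageI)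
    show "inj_on ?f {0..<2}" using xy by (auto simp: inj_on_def)
    have "{0..<2::nat} = {0, 1}" by auto
    then show "?f ` {0..<2} = V" using xy by auto
  qed
  moreover have "\<forall>i<2. \<forall>j<2. E (?f i) (?f j) \<longleftrightarrow> (i = Suc j \<or> j = Suc i)"
  proof (intro allI impI)
    fix i j :: nat assume "i < 2" "j < 2"
    then consider "i = 0" "j = 0" | "i = 0" "j = 1" | "i = 1" "j = 0" | "i = 1" "j = 1" by linarith
    then show "E (?f i) (?f j) \<longleftrightarrow> (i = Suc j \<or> j = Suc i)"
      by cases (use Exy Esym[OF Exy] in auto)
  qed
  ultimately show ?thesis unfolding is_path_graph_def by blast
next
  case False
  then have c3: "card V \<ge> 3" using c2 by simp
  have Gw: "card {l \<in> L. E w l} \<ge> 2" if "w \<in> V" "w \<notin> L" for w using LR that by (simp add: LR_def)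
  have degw: "degree V E w \<ge> 2" if w: "w \<in> V" "w \<notin> L" for w
  proof -
    have "{l \<in> L. E w l} \<subseteq> N w" using L_V by auto
    then have "card {l \<in> L. E w l} \<le> card (N w)" using finV by (intro card_mono) auto
    then show ?thesis using Gw[OF w] by (simp add: degree_def)
  qed
  show ?thesis
  proof (cases "\<exists>w\<in>V. w \<notin> L \<and> degree V E w = 2")
    case True
    then obtain w where w: "w \<in> V" "w \<notin> L" "degree V E w = 2" by blast
    from two_elems[OF Gw[OF w(1,2)]] obtain l1 l2 where
      "l1 \<in> {l \<in> L. E w l}" "l2 \<in> {l \<in> L. E w l}" "l1 \<noteq> l2" by (elim exE conjE)
    then have l: "l1 \<in> L" "E w l1" "l2 \<in> L" "E w l2" "l1 \<noteq> l2" by simp_all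
    have sub: "{l1, l2} \<subseteq> N w" using l L_V by auto
    have fN: "finite (N w)" using finV by simp
    have "card {l1, l2} = card (N w)" using w(3) l(5) by (simp add: degree_def)
    then have Nw: "N w = {l1, l2}" using card_subset_eq[OF fN sub] by simp
    have w1: "w = nb l1" using nbr_of_leaf l by blast
    have w2: "w = nb l2" using nbr_of_leaf l by blast
    have wl: "w \<noteq> l1" "w \<noteq> l2" using w l by auto
    have V3: "V = {l1, w, l2}"
    proof (rule closure[symmetric])
      show "{l1, w, l2} \<subseteq> V" using w l L_V by auto
      show "l1 \<in> {l1, w, l2}" by simp
    next
      fix x y assume x: "x \<in> {l1, w, l2}" and xy: "E x y"
      show "y \<in> {l1, w, l2}"
      proof -
        consider "x = l1" | "x = w" | "x = l2" using x by blast
        then show ?thesis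
        proof cases
          case 1 then show ?thesis using nb(2)[OF l(1)] xy w1 by simp
        next
          case 2 then have "y \<in> N w" using xy EV by auto
          then have "y \<in> {l1, l2}" using Nw by simp
          then show ?thesis by blast
        next
          case 3 then show ?thesis using nb(2)[OF l(3)] xy w2 by simp
        qed
      qed
    qed
    have n12: "\<not> E l1 l2"
    proof
      assume "E l1 l2"
      then have "l2 = nb l1" using nb(2)[OF l(1)] by simp
      then show False using w1 wl by simp
    qed
    let ?f = "\<lambda>i::nat. if i = 0 then l1 else if i = 1 then w else l2"
    have "bij_betw ?f {0..<3} V"
    proof (rule bij_betw_imageI)
      show "inj_on ?f {0..<3}" using wl l(5) by (auto simp: inj_on_def)
      have "{0..<3::nat} = {0, 1, 2}" by auto
      then show "?f ` {0..<3} = V" using V3 by auto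
    qed
    moreover have "\<forall>i<3. \<forall>j<3. E (?f i) (?f j) \<longleftrightarrow> (i = Suc j \<or> j = Suc i)"
    proof (intro allI impI)
      fix i j :: nat assume "i < 3" "j < 3"
      then have ij: "i \<in> {0, 1, 2}" "j \<in> {0, 1, 2}" by auto
      have n21: "\<not> E l2 l1" using n12 Esym by metis
      have e: "E l1 w" "E l2 w" using Esym[OF l(2)] Esym[OF l(4)] .
      show "E (?f i) (?f j) \<longleftrightarrow> (i = Suc j \<or> j = Suc i)"
        using ij l(2,4) e n12 n21 by auto
    qed
    ultimately show ?thesis unfolding is_path_graph_def by blast
  next
    case False
    have int_M2: "w \<in> M2 V E" if w: "w \<in> V" "w \<notin> L" for w
    proof -
      have "degree V E w \<ge> 3" using degw[OF w] False w by fastforce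
      then have maj: "major V E w" using w by (simp add: major_def)
      have "{l \<in> L. E w l} \<subseteq> terminal_vertices V E w"
      proof
        fix l assume "l \<in> {l \<in> L. E w l}"
        then have l: "l \<in> L" "E w l" by auto
        have "gdist V E l w < gdist V E l u" if u: "major V E u" "u \<noteq> w" for u
        proof -
          have uV: "u \<in> V" using u major_V by blast
          have "u \<noteq> l" using u major_not_leaf l by blast
          then have "gdist V E l u \<noteq> 0" using gdist_0 L_V[OF l(1)] uV by metis
          moreover have "gdist V E l u \<noteq> 1"
          proof
            assume "gdist V E l u = 1"
            then have "E l u" using gdist_1 L_V[OF l(1)] uV by blast
            then have "u = nb l" using nb(2)[OF l(1)] by simp
            moreover have "w = nb l" using nbr_of_leaf l by blast
            ultimately show False using u by simp
          qed
          moreover have "gdist V E l w = 1" using gdist_E Esym[OF l(2)] by blast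
          ultimately show ?thesis by linarith
        qed
        then show "l \<in> terminal_vertices V E w" using l by (simp add: terminal_vertices_def)
      qed
      moreover have "finite (terminal_vertices V E w)" using finL
        by (rule finite_subset[rotated]) (auto simp: terminal_vertices_def)
      ultimately have "card {l \<in> L. E w l} \<le> ter V E w" unfolding ter_def by (rule card_mono[rotated])
      then have "ter V E w \<ge> 2" using Gw[OF w] by simp
      then show ?thesis using maj by (simp add: M2_def exterior_major_def)
    qed
    have VM: "V = M2 V E \<union> L"
    proof
      show "V \<subseteq> M2 V E \<union> L" using int_M2 by blast
      show "M2 V E \<union> L \<subseteq> V" using major_V L_V by (auto simp: M2_def exterior_major_def)
    qed
    obtain l where lL: "l \<in> L" using leaves_exist c2 by blast
    have "nb l \<in> M2 V E" using int_M2 nb_V[OF lL] nb_internal[OF c3 lL] by blast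
    then have "nb l \<in> exterior_major V E" by (simp add: M2_def)
    moreover have "finite (exterior_major V E)"
      using finV by (rule finite_subset[rotated]) (auto simp: exterior_major_def major_def)
    ultimately have "ex_num V E \<ge> 1" unfolding ex_num_def
      by (metis One_nat_def Suc_leI card_gt_0_iff empty_iff)
    then show ?thesis using VM by blast
  qed
qed

end

theorem proposition3p16:
  fixes V :: "'a set" and E :: "'a \<Rightarrow> 'a \<Rightarrow> bool"
  assumes "is_tree V E" and "card V \<ge> 2"
  shows "frac_dim1 V E = frac_dim V E \<longleftrightarrow>
           (is_path_graph V E 2 \<or> is_path_graph V E 3 \<or>
            (ex_num V E \<ge> 1 \<and> V = M2 V E \<union> leaves V E))"
proof -
  interpret tree V E by unfold_locales (rule assms(1))
  have c2: "card V \<ge> 2" by (rule assms(2))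
  have cond: "(is_path_graph V E 2 \<or> is_path_graph V E 3 \<or> (ex_num V E \<ge> 1 \<and> V = M2 V E \<union> leaves V E))
      \<longleftrightarrow> LR"
    using LR_cond[OF _ c2] P2_LR P3_LR M2_LR by blast
  show ?thesis
  proof (cases LR)
    case True
    have "frac_dim1 V E \<le> card L / 2" by (rule LR_fd1[OF True c2])
    moreover have "card L / 2 \<le> frac_dim V E" by (rule LR_fd[OF True c2])
    moreover have "frac_dim V E \<le> frac_dim1 V E" by (rule fd_le_fd1[OF c2])
    ultimately show ?thesis using cond True by simp
  next
    case False
    have "card L / 2 + 1/6 \<le> frac_dim1 V E" by (rule fd1_gap[OF False c2])
    moreover have "frac_dim V E \<le> card L / 2" by (rule fd_upper[OF c2])
    ultimately show ?thesis using cond False by simp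
  qed
qed


end
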